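(* Let ${\mathbb K}$ be a field, $n\geqslant 2$ and $N$ a positive integer. Let $L$ be a set of lines of $\mathrm{AG}_n({\mathbb K})$, let $D\subseteq\mathrm{PG}_{n-1}({\mathbb K})$ be the set of directions of the lines of $L$, and let $S$ be a set of points of $\mathrm{AG}_n({\mathbb K})$ such that every line of $L$ is incident with at least $N$ points of $S$. If $D$ contains an $N^{n-1}$ grid then $|S|\geqslant(\frac{1}{2}N)^n$.
   Context: The direction of an affine line $\{u+\lambda v:\lambda\in{\mathbb K}\}$ is the point $\langle v\rangle$ of $\mathrm{PG}_{n-1}({\mathbb K})$. An $N^{n-1}$ grid in $\mathrm{PG}_{n-1}({\mathbb K})$ is a point set which, with respect to a suitable basis, has the form $\{\langle(a_1,\ldots,a_{n-1},1)\rangle : a_i\in A_i\}$, where each $A_i\subseteq{\mathbb K}$ has size $N$. *)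

theory Defs
  imports Complex_Main
begin

text \<open>Points of AG_n(K): vectors K^n, represented as functions nat => K vanishing
  outside {0..<n} (coordinate i stands for coordinate i+1 of the paper).\<close>
definition kvec :: "nat \<Rightarrow> (nat \<Rightarrow> 'a::field) set" where
  "kvec n = {x. \<forall>i\<ge>n. x i = 0}"

definition aline :: "(nat \<Rightarrow> 'a::field) \<Rightarrow> (nat \<Rightarrow> 'a) \<Rightarrow> (nat \<Rightarrow> 'a) set" where
  "aline u v = {(\<lambda>i. u i + c * v i) | c. True}"

definition is_aline :: "nat \<Rightarrow> (nat \<Rightarrow> 'a::field) set \<Rightarrow> bool" where
  "is_aline n l \<longleftrightarrow> (\<exists>u v. u \<in> kvec n \<and> v \<in> kvec n \<and> v \<noteq> (\<lambda>i. 0) \<and> l = aline u v)"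

definition ppoint :: "(nat \<Rightarrow> 'a::field) \<Rightarrow> (nat \<Rightarrow> 'a) set" where
  "ppoint v = {(\<lambda>i. c * v i) | c. c \<noteq> 0}"

definition directions :: "nat \<Rightarrow> (nat \<Rightarrow> 'a::field) set set \<Rightarrow> (nat \<Rightarrow> 'a) set set" where
  "directions n L = {ppoint v | v. v \<in> kvec n \<and> v \<noteq> (\<lambda>i. 0) \<and> (\<exists>u \<in> kvec n. aline u v \<in> L)}"

definition is_basis :: "nat \<Rightarrow> (nat \<Rightarrow> nat \<Rightarrow> 'a::field) \<Rightarrow> bool" where
  "is_basis n b \<longleftrightarrow> (\<forall>i<n. b i \<in> kvec n) \<and>
     (\<forall>c. (\<forall>j. (\<Sum>i<n. c i * b i j) = 0) \<longrightarrow> (\<forall>i<n. c i = 0))"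

text \<open>The grid {<(a_1,...,a_{n-1},1)> : a_i in A_i} w.r.t. basis b.\<close>
definition grid :: "nat \<Rightarrow> (nat \<Rightarrow> nat \<Rightarrow> 'a::field) \<Rightarrow> (nat \<Rightarrow> 'a set) \<Rightarrow> (nat \<Rightarrow> 'a) set set" where
  "grid n b A = {ppoint (\<lambda>j. (\<Sum>i<n-1. a i * b i j) + b (n-1) j) | a. \<forall>i<n-1. a i \<in> A i}"

definition contains_grid :: "nat \<Rightarrow> nat \<Rightarrow> (nat \<Rightarrow> 'a::field) set set \<Rightarrow> bool" where
  "contains_grid n N D \<longleftrightarrow> (\<exists>b A. is_basis n b \<and> (\<forall>i<n-1. finite (A i) \<and> card (A i) = N)
      \<and> grid n b A \<subseteq> D)"

end

theory Submission
  imports Defs "HOL-Library.Poly_Mapping" "HOL-Computational_Algebra.Polynomial" "HOL-Real_Asymp.Real_Asymp"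
begin


type_synonym 'a mp = "(nat \<Rightarrow>\<^sub>0 nat) \<Rightarrow>\<^sub>0 'a"
abbreviation lk where "lk \<equiv> Poly_Mapping.lookup"
abbreviation sg where "sg \<equiv> Poly_Mapping.single"
abbreviation ks where "ks \<equiv> Poly_Mapping.keys"

lemma pm_decomp: "(P::'k \<Rightarrow>\<^sub>0 'b::comm_monoid_add) = (\<Sum>\<alpha>\<in>ks P. sg \<alpha> (lk P \<alpha>))"
  by (rule poly_mapping_eqI) (simp add: lookup_sum lookup_single when_def in_keys_iff sum.delta' )

lemma pm_decomp_superset: "finite I \<Longrightarrow> ks P \<subseteq> I \<Longrightarrow> (P::'k \<Rightarrow>\<^sub>0 'b::comm_monoid_add) = (\<Sum>\<alpha>\<in>I. sg \<alpha> (lk P \<alpha>))"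
  apply (rule poly_mapping_eqI)
  apply (simp add: lookup_sum lookup_single when_def sum.delta')
  by (metis in_keys_iff subsetD)

definition tdeg :: "(nat \<Rightarrow>\<^sub>0 nat) \<Rightarrow> nat" where "tdeg a = sum (lk a) (ks a)"

lemma tdeg_superset: "finite I \<Longrightarrow> ks a \<subseteq> I \<Longrightarrow> tdeg a = sum (lk a) I"
  unfolding tdeg_def by (rule sum.mono_neutral_left) (auto simp: in_keys_iff)

lemma tdeg_add [simp]: "tdeg (a + b) = tdeg a + tdeg b"
proof -
  have f: "finite (ks a \<union> ks b)" by simp
  have "tdeg (a+b) = sum (lk (a+b)) (ks a \<union> ks b)"
    by (rule tdeg_superset[OF f]) (use keys_add[of a b] in blast)
  also have "\<dots> = sum (lk a) (ks a \<union> ks b) + sum (lk b) (ks a \<union> ks b)"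
    by (simp add: lookup_add sum.distrib)
  also have "\<dots> = tdeg a + tdeg b" by (simp add: tdeg_superset[of "ks a \<union> ks b"])
  finally show ?thesis .
qed

lemma tdeg_zero [simp]: "tdeg 0 = 0" by (simp add: tdeg_def)
lemma tdeg_single [simp]: "tdeg (sg i k) = k" by (simp add: tdeg_def)

definition mmon :: "(nat \<Rightarrow> 'b::comm_semiring_1) \<Rightarrow> (nat \<Rightarrow>\<^sub>0 nat) \<Rightarrow> 'b" where
  "mmon \<sigma> a = (\<Prod>i\<in>ks a. \<sigma> i ^ lk a i)"

lemma mmon_superset: "finite I \<Longrightarrow> ks a \<subseteq> I \<Longrightarrow> mmon \<sigma> a = (\<Prod>i\<in>I. \<sigma> i ^ lk a i)"
  unfolding mmon_def by (rule prod.mono_neutral_left) (auto simp: in_keys_iff)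

lemma mmon_add: "mmon \<sigma> (a + b) = mmon \<sigma> a * mmon \<sigma> b"
proof -
  have f: "finite (ks a \<union> ks b)" by simp
  have "mmon \<sigma> (a+b) = (\<Prod>i\<in>ks a \<union> ks b. \<sigma> i ^ lk (a+b) i)"
    by (rule mmon_superset[OF f]) (use keys_add[of a b] in blast)
  also have "\<dots> = (\<Prod>i\<in>ks a \<union> ks b. \<sigma> i ^ lk a i) * (\<Prod>i\<in>ks a \<union> ks b. \<sigma> i ^ lk b i)"
    by (simp add: lookup_add power_add prod.distrib)
  also have "\<dots> = mmon \<sigma> a * mmon \<sigma> b" by (simp add: mmon_superset[of "ks a \<union> ks b"])
  finally show ?thesis .
qed

lemma mmon_zero [simp]: "mmon \<sigma> 0 = 1" by (simp add: mmon_def)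
lemma mmon_single [simp]: "mmon \<sigma> (sg i k) = \<sigma> i ^ k"
  by (cases "k = 0") (simp_all add: mmon_def)

definition hom :: "('a::comm_semiring_1 \<Rightarrow> 'b::comm_semiring_1) \<Rightarrow> bool" where
  "hom \<phi> \<longleftrightarrow> \<phi> 0 = 0 \<and> \<phi> 1 = 1 \<and> (\<forall>x y. \<phi> (x+y) = \<phi> x + \<phi> y) \<and> (\<forall>x y. \<phi> (x*y) = \<phi> x * \<phi> y)"

definition subst :: "('a::comm_semiring_1 \<Rightarrow> 'b::comm_semiring_1) \<Rightarrow> (nat \<Rightarrow> 'b) \<Rightarrow> 'a mp \<Rightarrow> 'b" where
  "subst \<phi> \<sigma> P = (\<Sum>a\<in>ks P. \<phi> (lk P a) * mmon \<sigma> a)"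

lemma subst_superset: "\<phi> 0 = 0 \<Longrightarrow> finite I \<Longrightarrow> ks P \<subseteq> I \<Longrightarrow> subst \<phi> \<sigma> P = (\<Sum>a\<in>I. \<phi> (lk P a) * mmon \<sigma> a)"
  unfolding subst_def by (rule sum.mono_neutral_left) (auto simp: in_keys_iff)

lemma subst_add: assumes "hom \<phi>" shows "subst \<phi> \<sigma> (P + Q) = subst \<phi> \<sigma> P + subst \<phi> \<sigma> Q"
proof -
  have h: "\<phi> 0 = 0" "\<And>x y. \<phi> (x+y) = \<phi> x + \<phi> y" using assms by (auto simp: hom_def)
  have f: "finite (ks P \<union> ks Q)" by simp
  have "subst \<phi> \<sigma> (P+Q) = (\<Sum>a\<in>ks P \<union> ks Q. \<phi> (lk (P+Q) a) * mmon \<sigma> a)"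
    using subst_superset[of \<phi> "ks P \<union> ks Q" "P+Q"] h(1) keys_add[of P Q] by simp
  also have "\<dots> = (\<Sum>a\<in>ks P \<union> ks Q. \<phi> (lk P a) * mmon \<sigma> a) + (\<Sum>a\<in>ks P \<union> ks Q. \<phi> (lk Q a) * mmon \<sigma> a)"
    by (simp add: lookup_add h(2) distrib_right sum.distrib)
  also have "\<dots> = subst \<phi> \<sigma> P + subst \<phi> \<sigma> Q" using subst_superset[of \<phi> "ks P \<union> ks Q"] h(1) by auto
  finally show ?thesis .
qed

lemma subst_zero [simp]: "subst \<phi> \<sigma> 0 = 0" by (simp add: subst_def)

lemma subst_sum: assumes "hom \<phi>" shows "subst \<phi> \<sigma> (sum F A) = (\<Sum>x\<in>A. subst \<phi> \<sigma> (F x))"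
  by (induction A rule: infinite_finite_induct) (simp_all add: subst_add[OF assms])

lemma subst_single: assumes "hom \<phi>" shows "subst \<phi> \<sigma> (sg a c) = \<phi> c * mmon \<sigma> a"
  using assms by (cases "c = 0") (simp_all add: subst_def hom_def)

lemma subst_mult: assumes "hom \<phi>" shows "subst \<phi> \<sigma> (P * Q) = subst \<phi> \<sigma> P * subst \<phi> \<sigma> Q"
proof -
  have m: "\<And>x y. \<phi> (x*y) = \<phi> x * \<phi> y" using assms by (auto simp: hom_def)
  have "P * Q = (\<Sum>a\<in>ks P. sg a (lk P a)) * (\<Sum>b\<in>ks Q. sg b (lk Q b))"
    using pm_decomp[of P] pm_decomp[of Q] by simp
  also have "\<dots> = (\<Sum>a\<in>ks P. \<Sum>b\<in>ks Q. sg (a+b) (lk P a * lk Q b))"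
    by (simp add: sum_product mult_single)
  finally have "subst \<phi> \<sigma> (P*Q) = (\<Sum>a\<in>ks P. \<Sum>b\<in>ks Q. (\<phi> (lk P a) * mmon \<sigma> a) * (\<phi> (lk Q b) * mmon \<sigma> b))"
    by (simp add: subst_sum[OF assms] subst_single[OF assms] m mmon_add mult_ac)
  also have "\<dots> = subst \<phi> \<sigma> P * subst \<phi> \<sigma> Q"
    by (simp add: subst_def sum_product)
  finally show ?thesis .
qed

lemma subst_one [simp]: assumes "hom \<phi>" shows "subst \<phi> \<sigma> 1 = 1"
proof -
  have "(1::'a mp) = sg 0 1" by simp
  then show ?thesis using subst_single[OF assms, of \<sigma> 0 1] assms by (simp add: hom_def)
qed

lemma subst_prod: assumes "hom \<phi>" shows "subst \<phi> \<sigma> (prod F A) = (\<Prod>x\<in>A. subst \<phi> \<sigma> (F x))"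
  by (induction A rule: infinite_finite_induct) (simp_all add: subst_mult[OF assms] assms)

lemma subst_power: assumes "hom \<phi>" shows "subst \<phi> \<sigma> (P ^ k) = subst \<phi> \<sigma> P ^ k"
  by (induction k) (simp_all add: subst_mult[OF assms] assms)

definition Const :: "'a::comm_semiring_1 \<Rightarrow> 'a mp" where "Const c = sg 0 c"
definition Var :: "nat \<Rightarrow> 'a::comm_semiring_1 mp" where "Var i = sg (sg i 1) 1"

lemma hom_Const: "hom Const"
  by (simp add: hom_def Const_def single_add mult_single)

lemma hom_id: "hom id" by (simp add: hom_def)

lemma subst_Const: "hom \<phi> \<Longrightarrow> subst \<phi> \<sigma> (Const c) = \<phi> c"
  by (simp add: Const_def subst_single)
lemma subst_Var: "hom \<phi> \<Longrightarrow> subst \<phi> \<sigma> (Var i) = \<sigma> i"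
  by (simp add: Var_def subst_single hom_def)

lemma hom_subst: "hom \<phi> \<Longrightarrow> hom (subst \<phi> \<sigma>)"
  unfolding hom_def using subst_add subst_mult subst_one by (metis hom_def subst_zero)

lemma hom_comp: "hom \<phi> \<Longrightarrow> hom \<psi> \<Longrightarrow> hom (\<psi> \<circ> \<phi>)"
  by (simp add: hom_def)

lemma mmon_hom: "hom \<psi> \<Longrightarrow> \<psi> (mmon \<sigma> a) = mmon (\<psi> \<circ> \<sigma>) a"
proof -
  assume h: "hom \<psi>"
  have p: "\<psi> (x ^ k) = \<psi> x ^ k" for x k by (induction k) (use h in \<open>simp_all add: hom_def\<close>)
  have "\<psi> (prod F A) = (\<Prod>x\<in>A. \<psi> (F x))" for F and A :: "nat set"
    by (induction A rule: infinite_finite_induct) (use h in \<open>simp_all add: hom_def\<close>)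
  then show ?thesis by (simp add: mmon_def p)
qed

lemma hom_sum: "hom \<psi> \<Longrightarrow> \<psi> (sum F A) = (\<Sum>x\<in>A. \<psi> (F x))"
  by (induction A rule: infinite_finite_induct) (simp_all add: hom_def)

lemma subst_comp: assumes "hom \<phi>" "hom \<psi>"
  shows "\<psi> (subst \<phi> \<sigma> P) = subst (\<psi> \<circ> \<phi>) (\<psi> \<circ> \<sigma>) P"
proof -
  have m: "\<And>x y. \<psi> (x*y) = \<psi> x * \<psi> y" using assms(2) by (auto simp: hom_def)
  show ?thesis unfolding subst_def
    by (simp add: hom_sum[OF assms(2)] m mmon_hom[OF assms(2)])
qed


lemma lk_map: "f 0 = 0 \<Longrightarrow> lk (Poly_Mapping.map f p) k = f (lk p k)"
  by transfer (auto simp: when_def)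

lemma keys_map_sub: "ks (Poly_Mapping.map f p) \<subseteq> ks p"
  by transfer (auto simp: when_def)

lemma lk_Const: "lk (Const c) b = (if b = 0 then c else 0)"
  by (simp add: Const_def lookup_single)

lemma lk_Var: "lk (Var i) b = (if b = sg i 1 then 1 else 0)"
  by (simp add: Var_def lookup_single)

lemma lk_Const_mult: "lk (Const c * P) b = c * lk P b"
proof -
  have "Const c * P = Poly_Mapping.map ((*) c) P"
    by (simp add: Const_def mult_map_scale_conv_mult)
  then show ?thesis by (simp add: lk_map)
qed

lemma Const_add: "Const (x + y) = Const x + Const y" by (simp add: Const_def single_add)
lemma Const_mult: "Const (x * y) = Const x * Const y" by (simp add: Const_def mult_single)
lemma Const_0 [simp]: "Const 0 = 0" by (simp add: Const_def)
lemma Const_1 [simp]: "Const 1 = 1" by (simp add: Const_def)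
lemma Const_power: "Const (x ^ k) = Const x ^ k" by (induction k) (simp_all add: Const_mult)
lemma Const_prod: "Const (prod f A) = (\<Prod>x\<in>A. Const (f x))"
  by (induction A rule: infinite_finite_induct) (simp_all add: Const_mult)
lemma Const_sum: "Const (sum f A) = (\<Sum>x\<in>A. Const (f x))"
  by (induction A rule: infinite_finite_induct) (simp_all add: Const_add)
lemma Const_inj: "Const x = Const y \<longleftrightarrow> x = y"
  by (metis Const_def lookup_single_eq)

lemma Var_power: "(Var i :: 'a::comm_semiring_1 mp) ^ k = sg (sg i k) 1"
proof (induction k)
  case 0 then show ?case by simp
next
  case (Suc k)
  have "(Var i :: 'a mp) ^ Suc k = Var i * Var i ^ k" by simp
  also have "\<dots> = Var i * sg (sg i k) 1" using Suc.IH by simp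
  also have "\<dots> = sg (sg i (Suc k)) 1" unfolding Var_def mult_single by (simp add: single_add[symmetric])
  finally show ?case .
qed

lemma prod_single: "(\<Prod>i\<in>J. sg (b i) (c i)) = sg (\<Sum>i\<in>J. b i) (\<Prod>i\<in>J. c i)"
  by (induction J rule: infinite_finite_induct) (simp_all add: mult_single)

definition restr :: "(nat \<Rightarrow>\<^sub>0 nat) \<Rightarrow> nat set \<Rightarrow> (nat \<Rightarrow>\<^sub>0 nat)" where
  "restr a I = (\<Sum>i\<in>ks a \<inter> I. sg i (lk a i))"

lemma lk_restr: "lk (restr a I) i = (if i \<in> I then lk a i else 0)"
  unfolding restr_def by (simp add: lookup_sum lookup_single when_def sum.delta' in_keys_iff)

lemma keys_restr: "ks (restr a I) = ks a \<inter> I"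
  by (auto simp: in_keys_iff lk_restr split: if_splits)

lemma restr_UNIV [simp]: "restr a UNIV = a"
  by (rule poly_mapping_eqI) (simp add: lk_restr)

lemma mmon_VarConst:
  assumes "\<And>i. \<sigma> i = (if i \<in> I then Var i else Const (g i))"
  shows "mmon \<sigma> a = sg (restr a I) (\<Prod>i\<in>ks a - I. g i ^ lk a i)"
proof -
  have "mmon \<sigma> a = (\<Prod>i\<in>ks a \<inter> I. \<sigma> i ^ lk a i) * (\<Prod>i\<in>ks a - I. \<sigma> i ^ lk a i)"
    unfolding mmon_def by (rule prod.Int_Diff) simp
  also have "(\<Prod>i\<in>ks a \<inter> I. \<sigma> i ^ lk a i) = (\<Prod>i\<in>ks a \<inter> I. sg (sg i (lk a i)) 1)"
    by (rule prod.cong) (simp_all add: assms Var_power)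
  also have "\<dots> = sg (restr a I) 1" by (simp add: prod_single restr_def)
  also have "(\<Prod>i\<in>ks a - I. \<sigma> i ^ lk a i) = (\<Prod>i\<in>ks a - I. Const (g i ^ lk a i))"
    by (rule prod.cong) (simp_all add: assms Const_power)
  also have "\<dots> = sg 0 (\<Prod>i\<in>ks a - I. g i ^ lk a i)" by (simp add: Const_def prod_single)
  finally show ?thesis by (simp add: mult_single)
qed

lemma mmon_Var: "mmon Var a = sg a 1"
  using mmon_VarConst[of Var UNIV] by simp

lemma subst_Const_Var [simp]: "subst Const Var P = P"
proof -
  have "subst Const Var P = (\<Sum>a\<in>ks P. sg a (lk P a))"
    unfolding subst_def by (rule sum.cong) (simp_all add: mmon_Var Const_def mult_single)
  then show ?thesis using pm_decomp[of P] by simp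
qed

lemma subst_cong: "(\<And>a i. a \<in> ks P \<Longrightarrow> i \<in> ks a \<Longrightarrow> \<sigma> i = \<sigma>' i) \<Longrightarrow> subst \<phi> \<sigma> P = subst \<phi> \<sigma>' P"
  unfolding subst_def mmon_def by (intro sum.cong refl arg_cong2[where f="(*)"] prod.cong) auto

definition shift :: "(nat \<Rightarrow> 'a::comm_ring_1) \<Rightarrow> 'a mp \<Rightarrow> 'a mp" where
  "shift p P = subst Const (\<lambda>i. Const (p i) + Var i) P"

lemma shift_shift: "shift q (shift p P) = shift (\<lambda>i. p i + q i) P"
proof -
  have "shift q (shift p P) = subst (shift q \<circ> Const) (shift q \<circ> (\<lambda>i. Const (p i) + Var i)) P"
    unfolding shift_def by (rule subst_comp[OF hom_Const hom_subst[OF hom_Const]])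
  also have "\<dots> = shift (\<lambda>i. p i + q i) P"
    unfolding shift_def
    by (simp add: o_def subst_Const[OF hom_Const] subst_add[OF hom_Const] subst_Var[OF hom_Const] Const_add add_ac)
  finally show ?thesis .
qed

lemma shift_0: "shift (\<lambda>i. 0) P = P" by (simp add: shift_def)

lemma shift_inj: "shift p P = 0 \<Longrightarrow> P = (0::'a::comm_ring_1 mp)"
proof -
  assume "shift p P = 0"
  then have "shift (\<lambda>i. - p i) (shift p P) = 0" by (simp add: shift_def)
  then show ?thesis by (simp add: shift_shift shift_0)
qed

definition V :: "nat \<Rightarrow> 'a::zero mp \<Rightarrow> bool" where "V k P \<longleftrightarrow> (\<forall>b\<in>ks P. ks b \<subseteq> {..<k})"

lemma V_add: "V k P \<Longrightarrow> V k Q \<Longrightarrow> V k (P + Q)"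
  unfolding V_def using keys_add[of P Q] by (meson Un_iff subsetD)
lemma V_mult: assumes "V k P" "V k Q" shows "V k ((P::'a::comm_semiring_1 mp) * Q)"
  unfolding V_def
proof
  fix b assume "b \<in> ks (P * Q)"
  then obtain a c where b: "b = a + c" "a \<in> ks P" "c \<in> ks Q" using keys_mult[of P Q] by blast
  have "ks b \<subseteq> ks a \<union> ks c" using b(1) keys_add[of a c] by simp
  moreover have "ks a \<subseteq> {..<k}" "ks c \<subseteq> {..<k}" using assms b unfolding V_def by auto
  ultimately show "ks b \<subseteq> {..<k}" by blast
qed
lemma V_0 [simp]: "V k 0" by (simp add: V_def)
lemma V_1 [simp]: "V k (1::'a::comm_semiring_1 mp)" by (simp add: V_def)
lemma V_Const [simp]: "V k (Const c)" by (simp add: V_def Const_def)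
lemma V_Var: "i < k \<Longrightarrow> V k (Var i)" by (simp add: V_def Var_def)
lemma V_sum: "(\<And>x. x \<in> A \<Longrightarrow> V k (f x)) \<Longrightarrow> V k (sum f A)"
  by (induction A rule: infinite_finite_induct) (simp_all add: V_add)
lemma V_prod: "(\<And>x. x \<in> A \<Longrightarrow> V k (f x)) \<Longrightarrow> V k ((prod f A) :: 'a::comm_semiring_1 mp)"
  by (induction A rule: infinite_finite_induct) (simp_all add: V_mult)
lemma V_power: "V k P \<Longrightarrow> V k ((P::'a::comm_semiring_1 mp) ^ j)"
  by (induction j) (simp_all add: V_mult)

lemma V_subst: assumes "hom \<phi>" "V k P" "\<And>i. i < k \<Longrightarrow> V k (\<sigma> i)"
  shows "V k (subst (Const \<circ> \<phi>) \<sigma> P)"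
  unfolding subst_def mmon_def
  apply (rule V_sum) apply (rule V_mult) apply simp
  apply (rule V_prod) apply (rule V_power)
proof -
  fix a i assume "a \<in> ks P" "i \<in> ks a"
  then have "i < k" using assms(2) unfolding V_def by blast
  then show "V k (\<sigma> i)" using assms(3) by blast
qed

lemma V_shift: "V k P \<Longrightarrow> V k (shift p P)"
  unfolding shift_def using V_subst[OF hom_id, of k P] by (simp add: V_add V_Var)

lemma V_sub: "V k P \<Longrightarrow> b \<in> ks P \<Longrightarrow> ks b \<subseteq> {..<k}" by (simp add: V_def)


definition MS :: "nat \<Rightarrow> nat \<Rightarrow> (nat \<Rightarrow>\<^sub>0 nat) set" where
  "MS k D = {a. ks a \<subseteq> {..<k} \<and> tdeg a \<le> D}"

lemma sum_choose_aux: "(\<Sum>j\<le>D. (D - j + k) choose k) = (D + Suc k) choose Suc k"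
proof -
  have "(\<Sum>j\<le>D. (D - j + k) choose k) = (\<Sum>i\<le>D. (k + i) choose i)"
  proof (rule sum.reindex_bij_witness[of _ "\<lambda>i. D - i" "\<lambda>j. D - j"])
    fix j assume "j \<in> {..D}"
    then show "(k + (D - j)) choose (D - j) = (D - j + k) choose k"
      using binomial_symmetric[of k "D - j + k"] by (simp add: add.commute)
  qed auto
  also have "\<dots> = Suc (k + D) choose D" by (rule sum_choose_lower)
  also have "\<dots> = (D + Suc k) choose Suc k"
    using binomial_symmetric[of D "Suc (k + D)"] by (simp add: add.commute del: binomial_Suc_Suc)
  finally show ?thesis .
qed

lemma MS_card: "finite (MS k D) \<and> card (MS k D) = (D + k) choose k"
proof (induction k arbitrary: D)
  case 0
  have "MS 0 D = {0}" by (auto simp: MS_def)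
  then show ?case by simp
next
  case (Suc k)
  let ?g = "\<lambda>(j, b). b + sg k j"
  let ?X = "SIGMA j:{..D}. MS k (D - j)"
  have eq: "MS (Suc k) D = ?g ` ?X"
  proof
    show "?g ` ?X \<subseteq> MS (Suc k) D"
    proof
      fix x assume "x \<in> ?g ` ?X"
      then obtain j b where "j \<in> {..D}" "b \<in> MS k (D - j)" "x = b + sg k j" by auto
      then show "x \<in> MS (Suc k) D"
        using keys_add[of b "sg k j"] by (auto simp: MS_def split: if_splits)
    qed
    show "MS (Suc k) D \<subseteq> ?g ` ?X"
    proof
      fix a assume a: "a \<in> MS (Suc k) D"
      let ?b = "restr a {..<k}" and ?j = "lk a k"
      have ab: "a = ?b + sg k ?j"
      proof (rule poly_mapping_eqI)
        fix i
        have "i > k \<Longrightarrow> lk a i = 0" using a by (auto simp: MS_def in_keys_iff)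
        then show "lk a i = lk (?b + sg k ?j) i"
          by (cases "i < k"; cases "i = k") (auto simp: lookup_add lk_restr lookup_single)
      qed
      have "tdeg a = tdeg ?b + ?j" using ab by (metis tdeg_add tdeg_single)
      then have "?b \<in> MS k (D - ?j)" "?j \<le> D" using a by (auto simp: MS_def keys_restr)
      then show "a \<in> ?g ` ?X" using ab by force
    qed
  qed
  have inj: "inj_on ?g ?X"
  proof (rule inj_onI)
    fix x y assume hx: "x \<in> ?X" and hy: "y \<in> ?X" and e: "?g x = ?g y"
    obtain j b where x: "x = (j, b)" "b \<in> MS k (D - j)" using hx by auto
    obtain j' b' where y: "y = (j', b')" "b' \<in> MS k (D - j')" using hy by auto
    have h5: "b + sg k j = b' + sg k j'" using e x y by simp
    have "lk b k = 0" "lk b' k = 0" using x(2) y(2) by (auto simp: MS_def in_keys_iff)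
    then have "j = j'" using arg_cong[OF h5, of "\<lambda>x. lk x k"] by (simp add: lookup_add)
    with h5 x y show "x = y" by simp
  qed
  have fin: "finite ?X" using Suc by auto
  have "card (MS (Suc k) D) = card ?X" using eq card_image[OF inj] by simp
  also have "\<dots> = (\<Sum>j\<le>D. card (MS k (D - j)))" using Suc by (simp add: card_SigmaI)
  also have "\<dots> = (\<Sum>j\<le>D. (D - j + k) choose k)" using Suc by simp
  also have "\<dots> = (D + Suc k) choose Suc k" by (rule sum_choose_aux)
  finally show ?case using eq fin by simp
qed


lemma lin_solve:
  fixes w :: "'e \<Rightarrow> 'u \<Rightarrow> 'a::field"
  assumes "finite E" "finite U" "card E < card U"
  shows "\<exists>c. (\<exists>u\<in>U. c u \<noteq> 0) \<and> (\<forall>e\<in>E. (\<Sum>u\<in>U. w e u * c u) = 0)"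
  using assms
proof (induction E arbitrary: U w rule: finite_induct)
  case empty
  then have "U \<noteq> {}" by auto
  then show ?case by (intro exI[of _ "\<lambda>_. 1"]) auto
next
  case (insert e E)
  show ?case
  proof (cases "\<forall>u\<in>U. w e u = 0")
    case True
    obtain c where c: "\<exists>u\<in>U. c u \<noteq> 0" "\<forall>e\<in>E. (\<Sum>u\<in>U. w e u * c u) = 0"
      using insert.IH[of U w] insert.prems insert.hyps by auto
    then show ?thesis using True by (intro exI[of _ c]) auto
  next
    case False
    then obtain u0 where u0: "u0 \<in> U" "w e u0 \<noteq> 0" by auto
    define U' where "U' = U - {u0}"
    define w' where "w' = (\<lambda>x u. w x u - w x u0 / w e u0 * w e u)"
    have "card E < card U'" using insert.prems insert.hyps u0 by (simp add: U'_def)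
    then obtain c' where c': "\<exists>u\<in>U'. c' u \<noteq> 0" "\<forall>x\<in>E. (\<Sum>u\<in>U'. w' x u * c' u) = 0"
      using insert.IH[of U' w'] insert.prems by (auto simp: U'_def)
    define c where "c = (\<lambda>u. if u = u0 then - (\<Sum>v\<in>U'. w e v * c' v) / w e u0 else c' u)"
    have split: "(\<Sum>u\<in>U. w x u * c u) = w x u0 * c u0 + (\<Sum>u\<in>U'. w x u * c' u)" for x
    proof -
      have "(\<Sum>u\<in>U. w x u * c u) = w x u0 * c u0 + (\<Sum>u\<in>U'. w x u * c u)"
        unfolding U'_def using u0 insert.prems by (simp add: sum.remove)
      also have "(\<Sum>u\<in>U'. w x u * c u) = (\<Sum>u\<in>U'. w x u * c' u)"
        by (rule sum.cong) (auto simp: c_def U'_def)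
      finally show ?thesis .
    qed
    have "\<forall>x\<in>insert e E. (\<Sum>u\<in>U. w x u * c u) = 0"
    proof
      fix x assume x: "x \<in> insert e E"
      show "(\<Sum>u\<in>U. w x u * c u) = 0"
      proof (cases "x = e")
        case True
        have "(\<Sum>u\<in>U. w e u * c u) = w e u0 * c u0 + (\<Sum>u\<in>U'. w e u * c' u)" by (rule split)
        also have "\<dots> = 0" using u0 by (simp add: c_def)
        finally show ?thesis using True by simp
      next
        case False
        then have xE: "x \<in> E" using x by simp
        have "0 = (\<Sum>u\<in>U'. w' x u * c' u)" using c' xE by simp
        also have "\<dots> = (\<Sum>u\<in>U'. w x u * c' u) - w x u0 / w e u0 * (\<Sum>u\<in>U'. w e u * c' u)"
          by (simp add: w'_def algebra_simps sum_subtractf sum_distrib_left)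
        also have "\<dots> = w x u0 * c u0 + (\<Sum>u\<in>U'. w x u * c' u)"
          using u0 by (simp add: c_def field_simps)
        also have "\<dots> = (\<Sum>u\<in>U. w x u * c u)" by (rule split[symmetric])
        finally show ?thesis by simp
      qed
    qed
    moreover have "\<exists>u\<in>U. c u \<noteq> 0" using c' by (auto simp: c_def U'_def)
    ultimately show ?thesis by blast
  qed
qed

lemma exists_f:
  fixes S :: "(nat \<Rightarrow> 'a::field) set"
  assumes "finite S" "card S * card (MS n M) < card (MS n D)"
  shows "\<exists>f. f \<noteq> 0 \<and> ks f \<subseteq> MS n D \<and> (\<forall>p\<in>S. \<forall>b. tdeg b \<le> M \<longrightarrow> lk (shift p f) b = 0)"
proof -
  let ?E = "S \<times> MS n M" and ?U = "MS n D"
  define w where "w = (\<lambda>(p, b) a. lk (mmon (\<lambda>i. Const (p i) + Var i) a) b :: 'a)"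
  have "finite ?E" "finite ?U" "card ?E < card ?U"
    using assms MS_card by (auto simp: card_cartesian_product)
  then obtain c where c: "\<exists>u\<in>?U. c u \<noteq> 0" "\<forall>e\<in>?E. (\<Sum>u\<in>?U. w e u * c u) = 0"
    using lin_solve[of ?E ?U w] by blast
  define f where "f = (\<Sum>a\<in>?U. sg a (c a))"
  have finU: "finite ?U" using MS_card by auto
  have lkf: "lk f a = (if a \<in> ?U then c a else 0)" for a
    unfolding f_def using finU by (simp add: lookup_sum lookup_single when_def sum.delta')
  have ksf: "ks f \<subseteq> ?U" by (auto simp: in_keys_iff lkf split: if_splits)
  have "f \<noteq> 0" using c(1) lkf by (metis lookup_zero)
  moreover have "\<forall>p\<in>S. \<forall>b. tdeg b \<le> M \<longrightarrow> lk (shift p f) b = 0"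
  proof (intro ballI allI impI)
    fix p b assume p: "p \<in> S" and b: "tdeg b \<le> M"
    show "lk (shift p f) b = 0"
    proof (cases "ks b \<subseteq> {..<n}")
      case True
      have "shift p f = (\<Sum>a\<in>?U. Const (c a) * mmon (\<lambda>i. Const (p i) + Var i) a)"
        unfolding shift_def f_def by (simp add: subst_sum[OF hom_Const] subst_single[OF hom_Const])
      then have "lk (shift p f) b = (\<Sum>a\<in>?U. w (p, b) a * c a)"
        by (simp add: lookup_sum lk_Const_mult w_def mult.commute)
      also have "\<dots> = 0" using c(2) p b True by (auto simp: MS_def)
      finally show ?thesis .
    next
      case False
      have "V n f" using ksf by (auto simp: V_def MS_def)
      then have "V n (shift p f)" by (rule V_shift)
      then have "b \<notin> ks (shift p f)" using False by (auto simp: V_def)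
      then show ?thesis by (simp add: in_keys_iff)
    qed
  qed
  ultimately show ?thesis using ksf by blast
qed


section \<open>Divisibility of low-degree coefficients\<close>

definition Dv :: "'b::comm_semiring_1 \<Rightarrow> nat \<Rightarrow> 'b mp \<Rightarrow> bool" where
  "Dv \<tau> k P \<longleftrightarrow> (\<forall>g. \<tau> ^ (k - tdeg g) dvd lk P g)"

lemma Dv_add: "Dv \<tau> k P \<Longrightarrow> Dv \<tau> k Q \<Longrightarrow> Dv \<tau> k (P + Q)"
  by (simp add: Dv_def lookup_add)
lemma Dv_0 [simp]: "Dv \<tau> k 0" by (simp add: Dv_def)
lemma Dv_sum: "(\<And>x. x \<in> A \<Longrightarrow> Dv \<tau> k (f x)) \<Longrightarrow> Dv \<tau> k (sum f A)"
  by (induction A rule: infinite_finite_induct) (simp_all add: Dv_add)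
lemma Dv_mono: "j \<le> k \<Longrightarrow> Dv \<tau> k P \<Longrightarrow> Dv \<tau> j P"
  unfolding Dv_def by (meson diff_le_mono dvd_trans le_imp_power_dvd)
lemma Dv_k0 [simp]: "Dv \<tau> 0 P" by (simp add: Dv_def)
lemma Dv_single: "\<tau> ^ (k - tdeg a) dvd x \<Longrightarrow> Dv \<tau> k (sg a x)"
  by (simp add: Dv_def lookup_single when_def)
lemma Dv_single_iff: "Dv \<tau> k (sg a x) \<Longrightarrow> \<tau> ^ (k - tdeg a) dvd x"
  unfolding Dv_def by (metis lookup_single_eq)

lemma Dv_mult: assumes "Dv \<tau> k P" "Dv \<tau> l Q" shows "Dv \<tau> (k + l) (P * Q)"
proof -
  have "P * Q = (\<Sum>a\<in>ks P. sg a (lk P a)) * (\<Sum>b\<in>ks Q. sg b (lk Q b))"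
    using pm_decomp[of P] pm_decomp[of Q] by simp
  also have "\<dots> = (\<Sum>a\<in>ks P. \<Sum>b\<in>ks Q. sg (a+b) (lk P a * lk Q b))"
    by (simp add: sum_product mult_single)
  finally have e: "P * Q = \<dots>" .
  show ?thesis unfolding e
  proof (intro Dv_sum Dv_single)
    fix a b
    have "\<tau> ^ (k - tdeg a) dvd lk P a" "\<tau> ^ (l - tdeg b) dvd lk Q b"
      using assms by (auto simp: Dv_def)
    then have "\<tau> ^ ((k - tdeg a) + (l - tdeg b)) dvd lk P a * lk Q b"
      by (simp add: power_add mult_dvd_mono)
    moreover have "\<tau> ^ (k + l - tdeg (a + b)) dvd \<tau> ^ ((k - tdeg a) + (l - tdeg b))"
      by (rule le_imp_power_dvd) simp
    ultimately show "\<tau> ^ (k + l - tdeg (a + b)) dvd lk P a * lk Q b"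
      using dvd_trans by blast
  qed
qed

lemma Dv_one [simp]: "Dv \<tau> 0 1" by simp

lemma Dv_prod: "(\<And>i. i \<in> I \<Longrightarrow> Dv \<tau> (k i) (P i)) \<Longrightarrow> Dv \<tau> (sum k I) (prod P I)"
  by (induction I rule: infinite_finite_induct) (simp_all add: Dv_mult)

lemma Dv_power: "Dv \<tau> k P \<Longrightarrow> Dv \<tau> (k * j) (P ^ j)"
proof (induction j)
  case 0 then show ?case by simp
next
  case (Suc j)
  then have "Dv \<tau> (k + k * j) (P * P ^ j)" by (intro Dv_mult) auto
  then show ?case by (simp add: algebra_simps)
qed

lemma Dv_mmon: assumes "\<And>i. Dv \<tau> 1 (\<rho> i)" shows "Dv \<tau> (tdeg a) (mmon \<rho> a)"
proof -
  have "Dv \<tau> (\<Sum>i\<in>ks a. lk a i) (\<Prod>i\<in>ks a. \<rho> i ^ lk a i)"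
  proof (rule Dv_prod)
    fix i show "Dv \<tau> (lk a i) (\<rho> i ^ lk a i)" using Dv_power[OF assms, of "lk a i"] by simp
  qed
  then show ?thesis by (simp add: mmon_def tdeg_def)
qed

lemma Dv_Const: "Dv \<tau> 0 (Const x)" by simp

lemma Dv_subst:
  assumes "hom \<phi>" "\<And>i. Dv \<tau> 1 (\<rho> i)" "\<And>a. a \<in> ks G \<Longrightarrow> m \<le> tdeg a"
  shows "Dv \<tau> m (subst (Const \<circ> \<phi>) \<rho> G)"
  unfolding subst_def
proof (rule Dv_sum)
  fix a assume a: "a \<in> ks G"
  have "Dv \<tau> (0 + tdeg a) ((Const \<circ> \<phi>) (lk G a) * mmon \<rho> a)"
    by (rule Dv_mult) (simp, rule Dv_mmon[OF assms(2)])
  then show "Dv \<tau> m ((Const \<circ> \<phi>) (lk G a) * mmon \<rho> a)"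
    using Dv_mono assms(3)[OF a] by simp
qed

section \<open>Degree and top coefficients\<close>

definition Dg :: "nat \<Rightarrow> 'a::comm_ring_1 poly mp \<Rightarrow> bool" where
  "Dg k P \<longleftrightarrow> (\<forall>g. degree (lk P g) \<le> k)"

definition Tp :: "nat \<Rightarrow> 'a::comm_ring_1 poly mp \<Rightarrow> 'a mp" where
  "Tp k P = Poly_Mapping.map (\<lambda>q. coeff q k) P"

lemma lk_Tp: "lk (Tp k P) g = coeff (lk P g) k"
  by (simp add: Tp_def lk_map)

lemma Tp_add: "Tp k (P + Q) = Tp k P + Tp k Q"
  by (rule poly_mapping_eqI) (simp add: lk_Tp lookup_add)
lemma Tp_0 [simp]: "Tp k 0 = 0"
  by (rule poly_mapping_eqI) (simp add: lk_Tp)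
lemma Tp_sum: "Tp k (sum f A) = (\<Sum>x\<in>A. Tp k (f x))"
  by (induction A rule: infinite_finite_induct) (simp_all add: Tp_add)
lemma Tp_single: "Tp k (sg a x) = sg a (coeff x k)"
  by (rule poly_mapping_eqI) (simp add: lk_Tp lookup_single when_def)
lemma keys_Tp: "ks (Tp k P) \<subseteq> ks P"
  unfolding Tp_def by (rule keys_map_sub)

lemma Dg_add: "Dg k P \<Longrightarrow> Dg k Q \<Longrightarrow> Dg k (P + Q)"
  unfolding Dg_def by (simp add: lookup_add degree_add_le)
lemma Dg_0 [simp]: "Dg k 0" by (simp add: Dg_def)
lemma Dg_sum: "(\<And>x. x \<in> A \<Longrightarrow> Dg k (f x)) \<Longrightarrow> Dg k (sum f A)"
  by (induction A rule: infinite_finite_induct) (simp_all add: Dg_add)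
lemma Dg_mono: "k \<le> j \<Longrightarrow> Dg k P \<Longrightarrow> Dg j P"
  unfolding Dg_def using le_trans by blast
lemma Tp_beyond: assumes "Dg k P" "k < j" shows "Tp j P = 0"
proof (rule poly_mapping_eqI)
  fix g have "degree (lk P g) < j" using assms unfolding Dg_def by (meson le_less_trans)
  then show "lk (Tp j P) g = lk 0 g" by (simp add: lk_Tp coeff_eq_0)
qed
lemma Dg_single: "degree x \<le> k \<Longrightarrow> Dg k (sg a x)"
  by (simp add: Dg_def lookup_single when_def)

lemma coeff_mult_top:
  fixes p q :: "'a::comm_ring_1 poly"
  assumes "degree p \<le> k" "degree q \<le> l"
  shows "coeff (p * q) (k + l) = coeff p k * coeff q l"
proof -
  have z: "(\<Sum>i\<in>{..k+l} - {k}. coeff p i * coeff q (k + l - i)) = 0"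
  proof (rule sum.neutral, rule ballI)
    fix i assume "i \<in> {..k+l} - {k}"
    then have "i \<le> k + l" "i \<noteq> k" by auto
    then show "coeff p i * coeff q (k + l - i) = 0"
      using assms by (cases "i < k") (auto simp: coeff_eq_0)
  qed
  have "coeff (p * q) (k + l) = (\<Sum>i\<le>k+l. coeff p i * coeff q (k + l - i))"
    by (rule coeff_mult)
  also have "\<dots> = coeff p k * coeff q (k + l - k) + (\<Sum>i\<in>{..k+l} - {k}. coeff p i * coeff q (k + l - i))"
    by (rule sum.remove) auto
  finally show ?thesis using z by simp
qed

lemma DT_single_mult:
  fixes x y :: "'a::comm_ring_1 poly"
  assumes "degree x \<le> k" "degree y \<le> l"
  shows "Dg (k + l) (sg a x * sg b y) \<and> Tp (k + l) (sg a x * sg b y) = Tp k (sg a x) * Tp l (sg b y)"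
  using assms degree_mult_le[of x y]
  by (auto simp: mult_single Tp_single coeff_mult_top intro!: Dg_single)

lemma DT_mult:
  assumes "Dg k P" "Dg l Q"
  shows "Dg (k + l) (P * Q) \<and> Tp (k + l) (P * Q) = Tp k P * Tp l Q"
proof -
  have e: "P * Q = (\<Sum>a\<in>ks P. \<Sum>b\<in>ks Q. sg a (lk P a) * sg b (lk Q b))"
    using pm_decomp[of P] pm_decomp[of Q] by (metis (no_types) sum_product)
  have d: "degree (lk P a) \<le> k" "degree (lk Q b) \<le> l" for a b using assms by (auto simp: Dg_def)
  have D: "Dg (k + l) (P * Q)" unfolding e
    by (intro Dg_sum) (use DT_single_mult[OF d] in blast)
  have "Tp (k + l) (P * Q) = (\<Sum>a\<in>ks P. \<Sum>b\<in>ks Q. Tp k (sg a (lk P a)) * Tp l (sg b (lk Q b)))"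
    unfolding e Tp_sum using DT_single_mult[OF d] by simp
  also have "\<dots> = Tp k (\<Sum>a\<in>ks P. sg a (lk P a)) * Tp l (\<Sum>b\<in>ks Q. sg b (lk Q b))"
    by (simp add: Tp_sum sum_product)
  also have "\<dots> = Tp k P * Tp l Q" using pm_decomp[of P] pm_decomp[of Q] by simp
  finally show ?thesis using D by simp
qed

lemma Dg_one [simp]: "Dg 0 (1 :: 'a::comm_ring_1 poly mp)"
  by (simp add: Dg_def lookup_one when_def)
lemma Tp_one [simp]: "Tp 0 (1 :: 'a::comm_ring_1 poly mp) = 1"
  by (rule poly_mapping_eqI) (simp add: lk_Tp lookup_one when_def)

lemma DT_prod:
  "(\<And>i. i \<in> I \<Longrightarrow> Dg (k i) (P i)) \<Longrightarrow>
     Dg (sum k I) (prod P I) \<and> Tp (sum k I) (prod P I) = (\<Prod>i\<in>I. Tp (k i) (P i))"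
proof (induction I rule: infinite_finite_induct)
  case (insert x F)
  then show ?case using DT_mult[of "k x" "P x" "sum k F" "prod P F"] by simp
qed simp_all

lemma DT_power: "Dg k P \<Longrightarrow> Dg (k * j) (P ^ j) \<and> Tp (k * j) (P ^ j) = Tp k P ^ j"
proof (induction j)
  case 0 then show ?case by simp
next
  case (Suc j)
  then have "Dg (k + k * j) (P * P ^ j) \<and> Tp (k + k * j) (P * P ^ j) = Tp k P * Tp (k * j) (P ^ j)"
    by (intro DT_mult) auto
  then show ?case using Suc by (simp add: algebra_simps)
qed

lemma DT_mmon:
  assumes "\<And>i. Dg c (\<rho> i)"
  shows "Dg (c * tdeg a) (mmon \<rho> a) \<and> Tp (c * tdeg a) (mmon \<rho> a) = mmon (\<lambda>i. Tp c (\<rho> i)) a"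
proof -
  have "Dg (\<Sum>i\<in>ks a. c * lk a i) (\<Prod>i\<in>ks a. \<rho> i ^ lk a i) \<and>
        Tp (\<Sum>i\<in>ks a. c * lk a i) (\<Prod>i\<in>ks a. \<rho> i ^ lk a i) = (\<Prod>i\<in>ks a. Tp (c * lk a i) (\<rho> i ^ lk a i))"
    by (rule DT_prod) (use DT_power[OF assms] in blast)
  moreover have "(\<Prod>i\<in>ks a. Tp (c * lk a i) (\<rho> i ^ lk a i)) = (\<Prod>i\<in>ks a. Tp c (\<rho> i) ^ lk a i)"
    using DT_power[OF assms] by simp
  ultimately show ?thesis unfolding mmon_def tdeg_def by (simp add: sum_distrib_left)
qed

lemma Dg_Const: "degree x \<le> k \<Longrightarrow> Dg k (Const x)" by (simp add: Const_def Dg_single)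
lemma Tp_Const: "Tp k (Const x) = Const (coeff x k)" by (simp add: Const_def Tp_single)
lemma Dg_Var: "Dg 0 (Var i :: 'a::comm_ring_1 poly mp)" by (simp add: Var_def Dg_single)
lemma Tp_Var: "Tp 0 (Var i :: 'a::comm_ring_1 poly mp) = Var i" by (simp add: Var_def Tp_single)

definition ftop :: "nat \<Rightarrow> 'a::comm_monoid_add mp \<Rightarrow> 'a mp" where
  "ftop d f = (\<Sum>a\<in>{a\<in>ks f. tdeg a = d}. sg a (lk f a))"

lemma lk_ftop: "lk (ftop d f) a = (if tdeg a = d then lk f a else 0)"
  unfolding ftop_def by (simp add: lookup_sum lookup_single when_def sum.delta' in_keys_iff)

lemma keys_ftop: "ks (ftop d f) = {a\<in>ks f. tdeg a = d}"
  by (auto simp: in_keys_iff lk_ftop split: if_splits)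

abbreviation pC :: "'a::zero \<Rightarrow> 'a poly" where "pC c \<equiv> [:c:]"

lemma hom_pC: "hom (pC :: 'a::comm_ring_1 \<Rightarrow> 'a poly)"
  by (simp add: hom_def one_pCons)

lemma DT_subst_line:
  fixes f :: "'a::comm_ring_1 mp"
  assumes "\<And>a. a \<in> ks f \<Longrightarrow> tdeg a \<le> d" "\<And>i. Dg 1 (\<rho> i)"
  shows "Dg d (subst (Const \<circ> pC) \<rho> f) \<and>
         Tp d (subst (Const \<circ> pC) \<rho> f) = subst Const (\<lambda>i. Tp 1 (\<rho> i)) (ftop d f)"
proof -
  define \<sigma>' where "\<sigma>' = (\<lambda>i. Tp 1 (\<rho> i))"
  have t: "Dg (tdeg a) ((Const \<circ> pC) (lk f a) * mmon \<rho> a) \<and>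
      Tp (tdeg a) ((Const \<circ> pC) (lk f a) * mmon \<rho> a) = Const (lk f a) * mmon \<sigma>' a" for a
    using DT_mult[of 0 "Const [:lk f a:]" "tdeg a" "mmon \<rho> a"] DT_mmon[of 1 \<rho> a, OF assms(2)]
    unfolding \<sigma>'_def by (simp add: Dg_Const Tp_Const)
  have D: "Dg d (subst (Const \<circ> pC) \<rho> f)" unfolding subst_def
    by (intro Dg_sum) (use t assms(1) Dg_mono in blast)
  have "Tp d (subst (Const \<circ> pC) \<rho> f) =
      (\<Sum>a\<in>ks f. if tdeg a = d then Const (lk f a) * mmon \<sigma>' a else 0)"
    unfolding subst_def Tp_sum
  proof (rule sum.cong[OF refl])
    fix a assume a: "a \<in> ks f"
    show "Tp d ((Const \<circ> pC) (lk f a) * mmon \<rho> a) =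
      (if tdeg a = d then Const (lk f a) * mmon \<sigma>' a else 0)"
      using t[of a] assms(1)[OF a] Tp_beyond[of "tdeg a" _ d] by (cases "tdeg a = d") auto
  qed
  also have "\<dots> = subst Const \<sigma>' (ftop d f)"
    by (simp add: subst_def keys_ftop lk_ftop sum.inter_filter)
  finally show ?thesis using D unfolding \<sigma>'_def by simp
qed

lemma DT_subst_shift:
  fixes H :: "'a::comm_ring_1 poly mp"
  assumes "Dg e H" "\<And>i. Dg 0 (\<rho> i)"
  shows "Dg e (subst Const \<rho> H) \<and> Tp e (subst Const \<rho> H) = subst Const (\<lambda>i. Tp 0 (\<rho> i)) (Tp e H)"
proof -
  have d: "degree (lk H a) \<le> e" for a using assms(1) by (simp add: Dg_def)
  have t: "Dg e (Const (lk H a) * mmon \<rho> a) \<and>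
      Tp e (Const (lk H a) * mmon \<rho> a) = Const (coeff (lk H a) e) * mmon (\<lambda>i. Tp 0 (\<rho> i)) a" for a
    using DT_mult[of e "Const (lk H a)" 0 "mmon \<rho> a"] DT_mmon[of 0 \<rho> a, OF assms(2)] d[of a]
    by (simp add: Dg_Const Tp_Const)
  have D: "Dg e (subst Const \<rho> H)" unfolding subst_def
    by (intro Dg_sum) (use t in blast)
  have "Tp e (subst Const \<rho> H) = (\<Sum>a\<in>ks H. Const (lk (Tp e H) a) * mmon (\<lambda>i. Tp 0 (\<rho> i)) a)"
    unfolding subst_def Tp_sum using t by (simp add: lk_Tp)
  also have "\<dots> = subst Const (\<lambda>i. Tp 0 (\<rho> i)) (Tp e H)"
    by (rule subst_superset[symmetric]) (simp_all add: keys_Tp)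
  finally show ?thesis using D by simp
qed


lemma prod_order_dvd:
  fixes q :: "'a::idom poly"
  assumes "q \<noteq> 0" "finite T"
  shows "(\<Prod>c\<in>T. [:-c, 1:] ^ order c q) dvd q"
  using assms(2)
proof (induction T rule: finite_induct)
  case empty then show ?case by simp
next
  case (insert c0 T)
  let ?P = "\<Prod>c\<in>T. [:-c, 1:] ^ order c q"
  obtain r where r: "q = ?P * r" using insert.IH by (elim dvdE)
  have "poly ?P c0 \<noteq> 0" using insert.hyps by (auto simp: poly_prod)
  then have o0: "order c0 ?P = 0" by (rule order_0I)
  have "order c0 q = order c0 ?P + order c0 r" using r assms(1) order_mult by metis
  then have "order c0 r = order c0 q" using o0 by simp
  moreover have "r \<noteq> 0" using r assms(1) by auto
  ultimately have "[:-c0, 1:] ^ order c0 q dvd r" using order_1[of c0 r] by simp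
  then have "?P * [:-c0, 1:] ^ order c0 q dvd ?P * r" by (rule mult_dvd_mono[OF dvd_refl])
  then have X: "?P * [:-c0, 1:] ^ order c0 q dvd q" by (simp only: r[symmetric])
  show ?case by (subst prod.insert[OF insert.hyps], subst mult.commute) (rule X)
qed

lemma sum_order_le_degree:
  fixes q :: "'a::idom poly"
  assumes "q \<noteq> 0" "finite T"
  shows "(\<Sum>c\<in>T. order c q) \<le> degree q"
proof -
  have "degree (\<Prod>c\<in>T. [:-c, 1:] ^ order c q) = (\<Sum>c\<in>T. order c q)"
    by (subst degree_prod_sum_eq) (simp_all add: degree_linear_power)
  moreover have "degree (\<Prod>c\<in>T. [:-c, 1:] ^ order c q) \<le> degree q"
    by (rule dvd_imp_degree_le[OF prod_order_dvd[OF assms] assms(1)])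
  ultimately show ?thesis by simp
qed

lemma card_roots_mult:
  fixes q :: "'a::idom poly"
  assumes "q \<noteq> 0" "finite T" "\<And>c. c \<in> T \<Longrightarrow> [:-c, 1:] ^ k dvd q"
  shows "card T * k \<le> degree q"
proof -
  have "k \<le> order c q" if "c \<in> T" for c using assms(3)[OF that] assms(1) order_divides by blast
  then have "(\<Sum>c\<in>T. k) \<le> (\<Sum>c\<in>T. order c q)" by (rule sum_mono)
  then show ?thesis using sum_order_le_degree[OF assms(1,2)] by simp
qed

lemma coeff_taylor_order:
  fixes q :: "'a::idom poly"
  assumes "q \<noteq> 0"
  shows "coeff (pcompose q [:a, 1:]) (order a q) \<noteq> 0"
proof -
  obtain r where r: "q = [:-a, 1:] ^ order a q * r" "\<not> [:-a, 1:] dvd r"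
    using order_decomp[OF assms] by blast
  have pr: "poly r a \<noteq> 0" using r(2) poly_eq_0_iff_dvd by blast
  have b: "pcompose [:-a, 1:] [:a, 1:] = [:0, 1:]"
    by (simp only: pcompose_pCons pcompose_const) (simp add: one_pCons)
  have pw0: "pcompose (p ^ k) s = (pcompose p s) ^ k" for p s :: "'a poly" and k
    by (induction k) (simp_all add: pcompose_mult pcompose_1)
  have pw: "pcompose ([:-a, 1:] ^ k) [:a, 1:] = [:0, 1:] ^ k" for k
    by (simp add: pw0 b)
  have "pcompose q [:a, 1:] = [:0, 1:] ^ order a q * pcompose r [:a, 1:]"
    by (subst r(1)) (simp add: pcompose_mult pw)
  also have "\<dots> = monom 1 (order a q) * pcompose r [:a, 1:]"
    by (simp add: monom_altdef)
  finally have "coeff (pcompose q [:a, 1:]) (order a q) = coeff (pcompose r [:a, 1:]) 0"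
    by (simp add: coeff_monom_mult)
  also have "\<dots> = poly r a" by (simp add: poly_0_coeff_0[symmetric] poly_pcompose)
  finally show ?thesis using pr by simp
qed


lemma map_poly_hom_add: "hom \<phi> \<Longrightarrow> map_poly \<phi> (p + q) = map_poly \<phi> p + map_poly \<phi> q"
  by (intro poly_eqI) (simp add: coeff_map_poly hom_def)

lemma map_poly_hom_mult:
  assumes "hom \<phi>" shows "map_poly \<phi> (p * q) = map_poly \<phi> p * map_poly \<phi> q"
proof (intro poly_eqI)
  fix n
  have z: "\<phi> 0 = 0" and m: "\<And>x y. \<phi> (x*y) = \<phi> x * \<phi> y" using assms by (auto simp: hom_def)
  show "coeff (map_poly \<phi> (p * q)) n = coeff (map_poly \<phi> p * map_poly \<phi> q) n"
    by (simp add: coeff_map_poly z coeff_mult hom_sum[OF assms] m)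
qed

definition ev :: "('a::comm_ring_1 \<Rightarrow> 'b::comm_ring_1) \<Rightarrow> 'b \<Rightarrow> 'a poly \<Rightarrow> 'b" where
  "ev \<phi> X p = poly (map_poly \<phi> p) X"

lemma hom_ev: "hom \<phi> \<Longrightarrow> hom (ev \<phi> X)"
  unfolding hom_def ev_def
  using map_poly_hom_add[of \<phi>] map_poly_hom_mult[of \<phi>] by (auto simp: hom_def)

lemma ev_const: assumes "hom \<phi>" shows "ev \<phi> X [:c:] = \<phi> c"
proof -
  have z: "\<phi> 0 = 0" using assms by (simp add: hom_def)
  show ?thesis by (simp add: ev_def z map_poly_pCons)
qed

lemma ev_X: assumes "hom \<phi>" shows "ev \<phi> X [:c, 1:] = \<phi> c + X"
proof -
  have z: "\<phi> 0 = 0" "\<phi> 1 = 1" using assms by (auto simp: hom_def)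
  show ?thesis by (simp add: ev_def z map_poly_pCons)
qed

lemma Const_nz: "x \<noteq> 0 \<Longrightarrow> Const x \<noteq> 0"
  using Const_inj[of x 0] by simp

lemma hom_pcomp: "hom (\<lambda>p. pcompose p s)"
  by (simp add: hom_def pcompose_add pcompose_mult pcompose_1)

lemma lk_ev_Var:
  fixes p :: "'a::comm_ring_1 poly"
  assumes "ks g \<subseteq> {..<r}" "ks g' \<subseteq> {..<r}"
  shows "lk (ev Const (Var r) p * sg g 1) (g' + sg r k) = (if g = g' then coeff p k else 0)"
proof -
  have "ev Const (Var r) p = (\<Sum>j\<le>degree p. sg (sg r j) (coeff p j))"
    unfolding ev_def poly_altdef
    by (simp add: degree_map_poly[OF Const_nz] coeff_map_poly Var_power Const_mult[symmetric, unfolded Const_def] Const_def mult_single)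
  then have e: "ev Const (Var r) p * sg g 1 = (\<Sum>j\<le>degree p. sg (sg r j + g) (coeff p j))"
    by (simp add: sum_distrib_right mult_single)
  have iff: "sg r j + g = g' + sg r k \<longleftrightarrow> j = k \<and> g = g'" for j
  proof
    assume h: "sg r j + g = g' + sg r k"
    have "lk g r = 0" "lk g' r = 0" using assms by (auto simp: in_keys_iff)
    then have "j = k" using arg_cong[OF h, of "\<lambda>x. lk x r"] by (simp add: lookup_add)
    then show "j = k \<and> g = g'" using h by (simp add: add.commute)
  qed (simp add: add.commute)
  have "lk (ev Const (Var r) p * sg g 1) (g' + sg r k) =
      (\<Sum>j\<le>degree p. if j = k \<and> g = g' then coeff p j else 0)"
    unfolding e lookup_sum by (intro sum.cong refl) (simp add: lookup_single when_def iff)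
  also have "\<dots> = (if g = g' then coeff p k else 0)"
    by (cases "g = g'") (auto simp: coeff_eq_0)
  finally show ?thesis .
qed


definition gr :: "nat \<Rightarrow> (nat \<Rightarrow> 'a set) \<Rightarrow> (nat \<Rightarrow> 'a::zero) set" where
  "gr r A = {a. (\<forall>i<r. a i \<in> A i) \<and> (\<forall>i\<ge>r. a i = 0)}"

lemma gr_0: "gr 0 A = {\<lambda>i. 0}" by (auto simp: gr_def)

lemma gr_Suc: "gr (Suc r) A = (\<lambda>(a', x). a'(r := x)) ` (gr r A \<times> A r)"
proof
  show "gr (Suc r) A \<subseteq> (\<lambda>(a', x). a'(r := x)) ` (gr r A \<times> A r)"
  proof
    fix a assume a: "a \<in> gr (Suc r) A"
    then have "a(r := 0) \<in> gr r A" "a r \<in> A r" by (auto simp: gr_def)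
    then show "a \<in> (\<lambda>(a', x). a'(r := x)) ` (gr r A \<times> A r)"
      by (auto intro!: image_eqI[where x="(a(r:=0), a r)"])
  qed
qed (auto simp: gr_def)

lemma gr_inj: "inj_on (\<lambda>(a', x). a'(r := x)) (gr r A \<times> A r)"
proof (rule inj_onI, clarify)
  fix a x b y assume h: "a \<in> gr r A" "x \<in> A r" "b \<in> gr r A" "y \<in> A r" "a(r := x) = b(r := y)"
  have "x = y" using fun_cong[OF h(5), of r] by simp
  moreover have "a = b"
  proof
    fix i show "a i = b i"
      using fun_cong[OF h(5), of i] h(1,3) by (cases "i = r") (auto simp: gr_def)
  qed
  ultimately show "a = b \<and> x = y" by simp
qed

lemma gr_card: "\<forall>i<r. finite (A i) \<and> card (A i) = N \<Longrightarrow> finite (gr r A) \<and> card (gr r A) = N ^ r"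
proof (induction r)
  case 0 then show ?case by (simp add: gr_0)
next
  case (Suc r)
  then have f: "finite (gr r A)" "card (gr r A) = N ^ r" "finite (A r)" "card (A r) = N" by auto
  have "card (gr (Suc r) A) = card (gr r A \<times> A r)"
    unfolding gr_Suc by (rule card_image[OF gr_inj])
  then show ?case using f by (simp add: gr_Suc card_cartesian_product)
qed

definition Mu :: "'a::comm_ring_1 mp \<Rightarrow> (nat \<Rightarrow> 'a) \<Rightarrow> nat" where
  "Mu h a = Min (tdeg ` ks (shift a h))"

lemma Mu_le: "g \<in> ks (shift a h) \<Longrightarrow> Mu h a \<le> tdeg g"
  unfolding Mu_def by (rule Min_le) auto

lemma Mu_ge: "shift a h \<noteq> 0 \<Longrightarrow> (\<And>g. g \<in> ks (shift a h) \<Longrightarrow> m \<le> tdeg g) \<Longrightarrow> m \<le> Mu h a"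
  unfolding Mu_def by (subst Min_ge_iff) auto

lemma Mu_attained: "shift a h \<noteq> 0 \<Longrightarrow> \<exists>g\<in>ks (shift a h). tdeg g = Mu h a"
  unfolding Mu_def by (metis (mono_tags, lifting) Min_in empty_iff finite_imageI finite_keys image_iff image_is_empty keys_eq_empty)

lemma split_last: "ks a \<subseteq> {..<Suc r} \<Longrightarrow> a = restr a {..<r} + sg r (lk a r)"
proof (rule poly_mapping_eqI)
  fix i assume a: "ks a \<subseteq> {..<Suc r}"
  have "i > r \<Longrightarrow> lk a i = 0" using a by (auto simp: in_keys_iff)
  then show "lk a i = lk (restr a {..<r} + sg r (lk a r)) i"
    by (cases "i < r"; cases "i = r") (auto simp: lookup_add lk_restr lookup_single)
qed

lemma restr_last: "ks g \<subseteq> {..<r} \<Longrightarrow> restr (g + sg r j) {..<r} = g \<and> lk (g + sg r j) r = j"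
proof
  assume g: "ks g \<subseteq> {..<r}"
  then have gr: "lk g r = 0" by (auto simp: in_keys_iff)
  show "restr (g + sg r j) {..<r} = g"
  proof (rule poly_mapping_eqI)
    fix i show "lk (restr (g + sg r j) {..<r}) i = lk g i"
      using g by (auto simp: lk_restr lookup_add lookup_single in_keys_iff)
  qed
  show "lk (g + sg r j) r = j" using gr by (simp add: lookup_add)
qed

lemma H_formula:
  fixes h :: "'a::comm_ring_1 mp"
  assumes "V (Suc r) h"
  shows "subst (Const \<circ> pC) (\<lambda>i. if i \<in> {..<r} then Var i else Const [:0, 1:]) h =
    (\<Sum>a\<in>ks h. sg (restr a {..<r}) (monom (lk h a) (lk a r)))"
  unfolding subst_def
proof (rule sum.cong[OF refl])
  fix a assume a: "a \<in> ks h"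
  have ka: "ks a \<subseteq> {..<Suc r}" using assms a by (simp add: V_def)
  have p: "(\<Prod>i\<in>ks a - {..<r}. [:0, 1:] ^ lk a i) = ([:0, 1:] :: 'a poly) ^ lk a r"
  proof (cases "r \<in> ks a")
    case True
    then have "ks a - {..<r} = {r}" using ka by auto
    then show ?thesis by simp
  next
    case False
    have "x < r" if "x \<in> ks a" for x using ka that False by (metis lessThan_iff less_SucE subsetD)
    then have e: "ks a - {..<r} = {}" by auto
    have "lk a r = 0" using False by (simp add: in_keys_iff)
    then show ?thesis unfolding e by simp
  qed
  have "mmon (\<lambda>i. if i \<in> {..<r} then Var i else Const [:0, 1:]) a = sg (restr a {..<r}) (([:0, 1:] :: 'a poly) ^ lk a r)"
    apply (subst mmon_VarConst[where g="\<lambda>i. [:0, 1:]" and I="{..<r}"])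
     apply (rule refl)
    apply (rule arg_cong[where f="sg (restr a {..<r})", OF p])
    done
  then show "(Const \<circ> pC) (lk h a) * mmon (\<lambda>i. if i \<in> {..<r} then Var i else Const [:0, 1:]) a =
      sg (restr a {..<r}) (monom (lk h a) (lk a r))"
    by (simp add: Const_def mult_single monom_altdef)
qed

lemma coeff_H:
  fixes h :: "'a::comm_ring_1 mp"
  assumes "V (Suc r) h" "ks g \<subseteq> {..<r}"
  shows "coeff (lk (\<Sum>a\<in>ks h. sg (restr a {..<r}) (monom (lk h a) (lk a r))) g) j = lk h (g + sg r j)"
proof -
  have iff: "restr a {..<r} = g \<and> lk a r = j \<longleftrightarrow> a = g + sg r j" if "a \<in> ks h" for a
  proof -
    have ka: "ks a \<subseteq> {..<Suc r}" using assms that by (simp add: V_def)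
    show ?thesis using split_last[OF ka] restr_last[OF assms(2), of j] by metis
  qed
  have "coeff (lk (\<Sum>a\<in>ks h. sg (restr a {..<r}) (monom (lk h a) (lk a r))) g) j =
      (\<Sum>a\<in>ks h. if restr a {..<r} = g \<and> lk a r = j then lk h a else 0)"
    unfolding lookup_sum coeff_sum
    by (rule sum.cong[OF refl]) (auto simp: lookup_single when_def coeff_monom)
  also have "\<dots> = (\<Sum>a\<in>ks h. if a = g + sg r j then lk h a else 0)"
    by (rule sum.cong[OF refl]) (simp add: iff)
  also have "\<dots> = lk h (g + sg r j)" by (simp add: sum.delta' in_keys_iff)
  finally show ?thesis .
qed

lemma H_zero:
  fixes h :: "'a::comm_ring_1 mp"
  assumes "\<not> ks g \<subseteq> {..<r}"
  shows "lk (\<Sum>a\<in>ks h. sg (restr a {..<r}) (monom (lk h a) (lk a r))) g = 0"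
proof -
  have "restr a {..<r} \<noteq> g" for a using assms keys_restr[of a "{..<r}"] by auto
  then show ?thesis by (simp add: lookup_sum lookup_single when_def)
qed


lemma V0_keys: "V 0 h \<Longrightarrow> ks h \<subseteq> {0}"
  by (auto simp: V_def)

lemma GL:
  fixes h :: "'a::field mp"
  shows "\<forall>i<r. finite (A i) \<and> card (A i) = N \<Longrightarrow> h \<noteq> 0 \<Longrightarrow> V r h \<Longrightarrow> (\<forall>a\<in>ks h. tdeg a \<le> d) \<Longrightarrow>
    N * (\<Sum>a\<in>gr r A. Mu h a) \<le> d * N ^ r"
proof (induction r arbitrary: h d)
  case 0
  have "ks h \<noteq> {}" using "0.prems"(2) by simp
  then have "ks h = {0}" using V0_keys[OF "0.prems"(3)] subset_singletonD by blast
  then have "Mu h (\<lambda>i. 0) = 0" by (simp add: Mu_def shift_0)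
  then show ?case by (simp add: gr_0)
next
  case (Suc r)
  note A = Suc.prems(1) and h0 = Suc.prems(2) and Vh = Suc.prems(3) and dh = Suc.prems(4)
  define \<sigma>H where "\<sigma>H = (\<lambda>i. if i \<in> {..<r} then Var i else Const ([:0, 1:] :: 'a poly))"
  define H where "H = subst (Const \<circ> pC) \<sigma>H h"
  have Hf: "H = (\<Sum>a\<in>ks h. sg (restr a {..<r}) (monom (lk h a) (lk a r)))"
    unfolding H_def \<sigma>H_def by (rule H_formula[OF Vh])
  have cH: "coeff (lk H g) j = lk h (g + sg r j)" if "ks g \<subseteq> {..<r}" for g j
    unfolding Hf by (rule coeff_H[OF Vh that])
  have H0: "lk H g = 0" if "\<not> ks g \<subseteq> {..<r}" for g
    unfolding Hf by (rule H_zero[OF that])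
  have VH: "V r H" unfolding V_def using H0 by (auto simp: in_keys_iff)
  obtain a0 where a0: "a0 \<in> ks h" using h0 keys_eq_empty by blast
  have ka0: "ks a0 \<subseteq> {..<Suc r}" using Vh a0 by (simp add: V_def)
  have "coeff (lk H (restr a0 {..<r})) (lk a0 r) = lk h a0"
    using cH[of "restr a0 {..<r}" "lk a0 r"] split_last[OF ka0] by (simp add: keys_restr)
  then have "lk H (restr a0 {..<r}) \<noteq> 0" using a0 by (auto simp: in_keys_iff)
  then have Hne: "ks H \<noteq> {}" by (auto simp: in_keys_iff)
  define e where "e = Max ((\<lambda>g. degree (lk H g)) ` ks H)"
  have "e \<in> (\<lambda>g. degree (lk H g)) ` ks H" unfolding e_def by (rule Max_in) (use Hne in auto)
  then obtain g0 where g0: "g0 \<in> ks H" "degree (lk H g0) = e" by auto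
  have DgH: "Dg e H" unfolding Dg_def
  proof
    fix g show "degree (lk H g) \<le> e"
    proof (cases "g \<in> ks H")
      case True then show ?thesis unfolding e_def by (intro Max_ge) auto
    next
      case False then show ?thesis by (simp add: in_keys_iff)
    qed
  qed
  have kg0: "ks g0 \<subseteq> {..<r}" using VH g0(1) by (simp add: V_def)
  have lc: "coeff (lk H g0) e \<noteq> 0" using g0 by (metis in_keys_iff leading_coeff_0_iff)
  then have "lk h (g0 + sg r e) \<noteq> 0" using cH[OF kg0] by simp
  then have "tdeg g0 + e \<le> d" using dh by (metis in_keys_iff tdeg_add tdeg_single)
  then have ed: "e \<le> d" by simp
  define he where "he = Tp e H"
  have he0: "he \<noteq> 0" using lc unfolding he_def by (metis lk_Tp lookup_zero)
  have Vhe: "V r he" using VH keys_Tp[of e H] unfolding he_def V_def by blast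
  have dhe: "\<forall>a\<in>ks he. tdeg a \<le> d - e"
  proof
    fix a assume a: "a \<in> ks he"
    then have ka: "ks a \<subseteq> {..<r}" using Vhe by (simp add: V_def)
    have "lk h (a + sg r e) \<noteq> 0" using a cH[OF ka] by (simp add: he_def lk_Tp in_keys_iff)
    then have "tdeg a + e \<le> d" using dh by (metis in_keys_iff tdeg_add tdeg_single)
    then show "tdeg a \<le> d - e" by simp
  qed
  have A': "\<forall>i<r. finite (A i) \<and> card (A i) = N" using A by simp
  have IH: "N * (\<Sum>a\<in>gr r A. Mu he a) \<le> (d - e) * N ^ r"
    using Suc.IH[OF A' he0 Vhe dhe] .
  have Ar: "finite (A r)" "card (A r) = N" using A by auto
  have key: "(\<Sum>x\<in>A r. Mu h (a'(r := x))) \<le> N * Mu he a' + e" if a': "a' \<in> gr r A" for a'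
  proof -
    define \<rho>' where "\<rho>' = (\<lambda>i. Const [:a' i:] + Var i :: 'a poly mp)"
    define Q where "Q = subst Const \<rho>' H"
    have D0: "Dg 0 (\<rho>' i)" for i unfolding \<rho>'_def by (intro Dg_add Dg_Const Dg_Var) simp
    have T0: "(\<lambda>i. Tp 0 (\<rho>' i)) = (\<lambda>i. Const (a' i) + Var i)"
      unfolding \<rho>'_def by (simp add: Tp_add Tp_Const Tp_Var)
    have DT: "Dg e Q \<and> Tp e Q = subst Const (\<lambda>i. Tp 0 (\<rho>' i)) (Tp e H)"
      unfolding Q_def by (rule DT_subst_shift[OF DgH]) (rule D0)
    then have DQ: "Dg e Q" and TQ: "Tp e Q = shift a' he"
      unfolding T0 shift_def he_def by auto
    have sh0: "shift a' he \<noteq> 0" using shift_inj he0 by blast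
    obtain \<gamma> where \<gamma>: "\<gamma> \<in> ks (shift a' he)" "tdeg \<gamma> = Mu he a'" using Mu_attained[OF sh0] by blast
    define q where "q = lk Q \<gamma>"
    have cq: "coeff q e \<noteq> 0" using \<gamma>(1) TQ unfolding q_def by (metis in_keys_iff lk_Tp)
    then have q0: "q \<noteq> 0" by auto
    have dq: "degree q \<le> e" using DQ unfolding q_def Dg_def by simp
    have k\<gamma>: "ks \<gamma> \<subseteq> {..<r}" using V_shift[OF Vhe] \<gamma>(1) by (simp add: V_def)
    have VQ: "V r Q"
    proof -
      have "V r (subst (Const \<circ> id) \<rho>' H)"
        by (rule V_subst[OF hom_id VH]) (simp add: \<rho>'_def V_add V_Var)
      then show ?thesis unfolding Q_def by simp
    qed
    have step: "Mu h (a'(r := x)) \<le> Mu he a' + order x q" if x: "x \<in> A r" for x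
    proof -
      define a where "a = a'(r := x)"
      define T where "T = (\<lambda>p. ev Const (Var r) (pcompose p [:x, 1:]) :: 'a mp)"
      have hT: "hom T"
      proof -
        have "hom (ev Const (Var r) \<circ> (\<lambda>p. pcompose p [:x, 1:]))"
          by (rule hom_comp[OF hom_pcomp hom_ev[OF hom_Const]])
        then show ?thesis by (simp add: T_def o_def)
      qed
      have Tc: "T [:c:] = Const c" for c unfolding T_def by (simp add: ev_const[OF hom_Const])
      have "pcompose [:0, 1:] [:x, 1:] = [:x, 1:]" by (simp add: pcompose_pCons)
      then have TX: "T [:0, 1:] = Const x + Var r" unfolding T_def by (simp add: ev_X[OF hom_Const])
      have sh: "subst T Var Q = shift a h"
      proof -
        have "subst T Var Q = subst (subst T Var \<circ> Const) (subst T Var \<circ> \<rho>') H"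
          unfolding Q_def by (rule subst_comp[OF hom_Const hom_subst[OF hT]])
        also have "(subst T Var \<circ> Const) = T" by (rule ext) (simp add: subst_Const[OF hT])
        also have "(subst T Var \<circ> \<rho>') = (\<lambda>i. Const (a' i) + Var i)"
          by (rule ext) (simp add: \<rho>'_def subst_add[OF hT] subst_Const[OF hT] subst_Var[OF hT] Tc)
        also have "subst T (\<lambda>i. Const (a' i) + Var i) H =
            subst (subst T (\<lambda>i. Const (a' i) + Var i) \<circ> (Const \<circ> pC))
                  (subst T (\<lambda>i. Const (a' i) + Var i) \<circ> \<sigma>H) h"
          unfolding H_def by (rule subst_comp[OF hom_comp[OF hom_pC hom_Const] hom_subst[OF hT]])
        also have "subst T (\<lambda>i. Const (a' i) + Var i) \<circ> (Const \<circ> pC) = Const"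
          by (rule ext) (simp add: subst_Const[OF hT] Tc)
        also have "subst T (\<lambda>i. Const (a' i) + Var i) \<circ> \<sigma>H =
            (\<lambda>i. if i < r then Const (a' i) + Var i else Const x + Var r)"
          by (rule ext) (simp add: \<sigma>H_def subst_Const[OF hT] subst_Var[OF hT] TX)
        also have "subst Const (\<lambda>i. if i < r then Const (a' i) + Var i else Const x + Var r) h = shift a h"
          unfolding shift_def
        proof (rule subst_cong)
          fix b i assume "b \<in> ks h" "i \<in> ks b"
          then have "i < Suc r" using Vh by (auto simp: V_def)
          then show "(if i < r then Const (a' i) + Var i else Const x + Var r) = Const (a i) + Var i"
            by (cases "i = r") (auto simp: a_def)
        qed
        finally show ?thesis .
      qed
      have lk_sh: "lk (shift a h) (\<gamma> + sg r k) = coeff (pcompose q [:x, 1:]) k" for k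
      proof -
        have "lk (shift a h) (\<gamma> + sg r k) = (\<Sum>g\<in>ks Q. lk (T (lk Q g) * sg g 1) (\<gamma> + sg r k))"
          unfolding sh[symmetric] subst_def by (simp add: mmon_Var lookup_sum)
        also have "\<dots> = (\<Sum>g\<in>ks Q. if g = \<gamma> then coeff (pcompose (lk Q g) [:x, 1:]) k else 0)"
        proof (rule sum.cong[OF refl])
          fix g assume "g \<in> ks Q"
          then have "ks g \<subseteq> {..<r}" using VQ by (simp add: V_def)
          then show "lk (T (lk Q g) * sg g 1) (\<gamma> + sg r k) =
              (if g = \<gamma> then coeff (pcompose (lk Q g) [:x, 1:]) k else 0)"
            unfolding T_def by (rule lk_ev_Var[OF _ k\<gamma>])
        qed
        also have "\<dots> = coeff (pcompose q [:x, 1:]) k"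
          by (simp add: sum.delta' q_def in_keys_iff)
        finally show ?thesis .
      qed
      have "lk (shift a h) (\<gamma> + sg r (order x q)) \<noteq> 0"
        using lk_sh coeff_taylor_order[OF q0] by simp
      then have "Mu h a \<le> tdeg (\<gamma> + sg r (order x q))" by (intro Mu_le) (simp add: in_keys_iff)
      then show ?thesis using \<gamma>(2) by (simp add: a_def)
    qed
    have "(\<Sum>x\<in>A r. Mu h (a'(r := x))) \<le> (\<Sum>x\<in>A r. Mu he a' + order x q)"
      by (rule sum_mono) (rule step)
    also have "\<dots> = N * Mu he a' + (\<Sum>x\<in>A r. order x q)"
      using Ar by (simp add: sum.distrib)
    also have "(\<Sum>x\<in>A r. order x q) \<le> e"
      using sum_order_le_degree[OF q0 Ar(1)] dq by simp
    finally show ?thesis by simp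
  qed
  have gfin: "finite (gr r A)" "card (gr r A) = N ^ r" using gr_card[OF A'] by auto
  have "(\<Sum>a\<in>gr (Suc r) A. Mu h a) = (\<Sum>a'\<in>gr r A. \<Sum>x\<in>A r. Mu h (a'(r := x)))"
    unfolding gr_Suc
    by (subst sum.reindex[OF gr_inj]) (simp add: sum.cartesian_product split_def)
  also have "\<dots> \<le> (\<Sum>a'\<in>gr r A. N * Mu he a' + e)"
    by (rule sum_mono) (rule key)
  also have "\<dots> = N * (\<Sum>a'\<in>gr r A. Mu he a') + e * N ^ r"
    using gfin by (simp add: sum.distrib sum_distrib_left)
  finally have S: "(\<Sum>a\<in>gr (Suc r) A. Mu h a) \<le> N * (\<Sum>a'\<in>gr r A. Mu he a') + e * N ^ r" .
  have "N * (\<Sum>a\<in>gr (Suc r) A. Mu h a) \<le> N * (N * (\<Sum>a'\<in>gr r A. Mu he a')) + N * (e * N ^ r)"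
    using mult_le_mono2[OF S, of N] by (simp add: algebra_simps)
  also have "\<dots> \<le> N * ((d - e) * N ^ r) + N * (e * N ^ r)"
    using mult_le_mono2[OF IH, of N] by simp
  also have "\<dots> = N * (((d - e) + e) * N ^ r)" by (simp add: algebra_simps)
  also have "\<dots> = d * N ^ Suc r" using ed by simp
  finally show ?case .
qed


lemma poly_line_id: "[:u + c * v:] + [:- c, 1:] * [:v:] = [:u, v::'a::comm_ring_1:]"
  by (simp add: algebra_simps)

lemma line_lemma:
  fixes f :: "'a::field mp" and u v :: "nat \<Rightarrow> 'a" and T :: "'a set"
  assumes Vf: "V (Suc r) f" and dl: "\<And>a. a \<in> ks f \<Longrightarrow> tdeg a \<le> d"
    and mult: "\<And>c b. c \<in> T \<Longrightarrow> tdeg b < m \<Longrightarrow> lk (shift (\<lambda>i. u i + c * v i) f) b = 0"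
    and Tfin: "finite T" and vr: "v r = 1"
    and big: "d < card T * (m - tdeg g)"
  shows "lk (subst Const (\<lambda>i. if i < r then Const (v i) + Var i else 1) (ftop d f)) g = 0"
proof -
  define \<sigma> where "\<sigma> = (\<lambda>i. Const [:u i, v i:] + (if i < r then Const [:0, 1:] * Var i else 0) :: 'a poly mp)"
  define F where "F = subst (Const \<circ> pC) \<sigma> f"
  have D1: "Dg 1 (\<sigma> i)" for i
  proof -
    have "Dg (1 + 0) (Const [:0, 1:] * (Var i :: 'a poly mp))"
      using DT_mult[of 1 "Const [:0, 1:] :: 'a poly mp" 0 "Var i"] by (simp add: Dg_Const Dg_Var)
    then show ?thesis unfolding \<sigma>_def by (intro Dg_add Dg_Const) auto
  qed
  have T1: "Tp 1 (\<sigma> i) = Const (v i) + (if i < r then Var i else 0)" for i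
  proof -
    have "Tp (1 + 0) (Const [:0, 1:] * (Var i :: 'a poly mp)) = Var i"
      using DT_mult[of 1 "Const [:0, 1:] :: 'a poly mp" 0 "Var i"] by (simp add: Dg_Const Dg_Var Tp_Const Tp_Var)
    then show ?thesis unfolding \<sigma>_def by (simp add: Tp_add Tp_Const)
  qed
  have DT: "Dg d F \<and> Tp d F = subst Const (\<lambda>i. Tp 1 (\<sigma> i)) (ftop d f)"
    unfolding F_def by (rule DT_subst_line) (use dl D1 in auto)
  have Vft: "V (Suc r) (ftop d f)" using Vf keys_ftop[of d f] by (auto simp: V_def)
  have Ftop: "Tp d F = subst Const (\<lambda>i. if i < r then Const (v i) + Var i else 1) (ftop d f)"
    unfolding DT[THEN conjunct2]
  proof (rule subst_cong)
    fix a i assume "a \<in> ks (ftop d f)" "i \<in> ks a"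
    then have "i < Suc r" using Vft by (auto simp: V_def)
    then show "Tp 1 (\<sigma> i) = (if i < r then Const (v i) + Var i else 1)"
      using vr T1[of i, unfolded One_nat_def] T1[of i] by (cases "i = r") auto
  qed
  have divs: "[:-c, 1:] ^ (m - tdeg g) dvd lk F g" if c: "c \<in> T" for c
  proof -
    define \<tau> where "\<tau> = [:-c, 1:]"
    define p where "p = (\<lambda>i. u i + c * v i)"
    define \<rho> where "\<rho> = (\<lambda>i. Const (\<tau> * [:v i:]) + (if i < r then Const [:0, 1:] * Var i else 0) :: 'a poly mp)"
    have hc: "hom (Const \<circ> pC :: 'a \<Rightarrow> 'a poly mp)" by (rule hom_comp[OF hom_pC hom_Const])
    have "subst (Const \<circ> pC) \<rho> (shift p f) =
        subst (subst (Const \<circ> pC) \<rho> \<circ> Const) (subst (Const \<circ> pC) \<rho> \<circ> (\<lambda>i. Const (p i) + Var i)) f"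
      unfolding shift_def by (rule subst_comp[OF hom_Const hom_subst[OF hc]])
    also have "(subst (Const \<circ> pC) \<rho> \<circ> Const) = Const \<circ> pC"
      by (rule ext) (simp add: subst_Const[OF hc])
    also have "(subst (Const \<circ> pC) \<rho> \<circ> (\<lambda>i. Const (p i) + Var i)) = \<sigma>"
    proof (rule ext)
      fix i
      have "Const [:p i:] + Const (\<tau> * [:v i:]) = (Const [:u i, v i:] :: 'a poly mp)"
        unfolding Const_add[symmetric] p_def \<tau>_def by (simp only: poly_line_id)
      then show "(subst (Const \<circ> pC) \<rho> \<circ> (\<lambda>i. Const (p i) + Var i)) i = \<sigma> i"
        by (simp add: subst_add[OF hc] subst_Const[OF hc] subst_Var[OF hc] \<rho>_def \<sigma>_def add.assoc)
    qed
    finally have FF: "subst (Const \<circ> pC) \<rho> (shift p f) = F" unfolding F_def .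
    have Dr: "Dv \<tau> 1 (\<rho> i)" for i
    proof -
      have a: "Dv \<tau> 1 (Const (\<tau> * [:v i:]))" unfolding Const_def by (rule Dv_single) (simp only: tdeg_zero diff_zero power_one_right dvd_triv_left)
      have "Dv \<tau> (0 + 1) (Const [:0, 1:] * (Var i :: 'a poly mp))"
        by (rule Dv_mult) (simp_all add: Var_def Dv_single)
      then show ?thesis unfolding \<rho>_def using a by (auto intro: Dv_add)
    qed
    have km: "m \<le> tdeg b" if "b \<in> ks (shift p f)" for b
      using mult[OF c, of b] that unfolding p_def by (auto simp: in_keys_iff not_less[symmetric])
    have "Dv \<tau> m (subst (Const \<circ> pC) \<rho> (shift p f))"
      by (rule Dv_subst[OF hom_pC]) (use Dr km in auto)
    then show ?thesis unfolding FF \<tau>_def Dv_def by simp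
  qed
  have "lk F g = 0"
  proof (rule ccontr)
    assume nz: "lk F g \<noteq> 0"
    have "card T * (m - tdeg g) \<le> degree (lk F g)"
      by (rule card_roots_mult[OF nz Tfin divs])
    also have "\<dots> \<le> d" using DT by (simp add: Dg_def)
    finally show False using big by simp
  qed
  then have "lk (Tp d F) g = 0" by (simp add: lk_Tp)
  then show ?thesis unfolding Ftop .
qed


lemma dehom_formula:
  fixes F :: "'a::comm_ring_1 mp"
  assumes "V (Suc r) F"
  shows "subst Const (\<lambda>i. if i \<in> {..<r} then Var i else Const 1) F = (\<Sum>a\<in>ks F. sg (restr a {..<r}) (lk F a))"
  unfolding subst_def
proof (rule sum.cong[OF refl])
  fix a assume "a \<in> ks F"
  have "mmon (\<lambda>i. if i \<in> {..<r} then Var i else Const 1) a = sg (restr a {..<r}) (1 :: 'a)"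
    by (subst mmon_VarConst[where g="\<lambda>i. 1" and I="{..<r}"]) simp_all
  then show "Const (lk F a) * mmon (\<lambda>i. if i \<in> {..<r} then Var i else Const 1) a = sg (restr a {..<r}) (lk F a)"
    by (simp add: Const_def mult_single)
qed

lemma tdeg_restr_le: "ks a \<subseteq> {..<Suc r} \<Longrightarrow> tdeg (restr a {..<r}) \<le> tdeg a"
  using split_last[of a r] by (metis le_add1 tdeg_add)

lemma core_count:
  fixes S :: "(nat \<Rightarrow> 'a::field) set" and A :: "nat \<Rightarrow> 'a set"
  assumes Sfin: "finite S" and N: "0 < N"
    and A: "\<forall>i<r. finite (A i) \<and> card (A i) = N"
    and lines: "\<And>a. a \<in> gr r A \<Longrightarrow> \<exists>u. N \<le> card {c. (\<lambda>i. u i + c * (a(r := 1)) i) \<in> S}"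
    and l: "1 \<le> l"
  shows "(l * N - 1 + Suc r) choose Suc r \<le> card S * ((2 * l - 1 + Suc r) choose Suc r)"
proof (rule ccontr)
  let ?n = "Suc r"
  assume "\<not> ?thesis"
  then have lt: "card S * card (MS ?n (2 * l - 1)) < card (MS ?n (l * N - 1))"
    using MS_card by simp
  obtain f :: "'a mp" where f: "f \<noteq> 0" "ks f \<subseteq> MS ?n (l * N - 1)"
    "\<forall>p\<in>S. \<forall>b. tdeg b \<le> 2 * l - 1 \<longrightarrow> lk (shift p f) b = 0"
    using exists_f[OF Sfin lt] by blast
  have Vf: "V ?n f" using f(2) by (auto simp: V_def MS_def)
  define d where "d = Max (tdeg ` ks f)"
  have ksne: "ks f \<noteq> {}" using f(1) by simp
  have dl: "\<And>a. a \<in> ks f \<Longrightarrow> tdeg a \<le> d" unfolding d_def by (intro Max_ge) auto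
  have dD: "d \<le> l * N - 1" unfolding d_def using f(2) ksne by (subst Max_le_iff) (auto simp: MS_def)
  have "d \<in> tdeg ` ks f" unfolding d_def by (rule Max_in) (use ksne in auto)
  then obtain a0 where a0: "a0 \<in> ks f" "tdeg a0 = d" by auto
  have Vft: "V ?n (ftop d f)" using Vf keys_ftop[of d f] by (auto simp: V_def)
  define h where "h = subst Const (\<lambda>i. if i \<in> {..<r} then Var i else Const 1) (ftop d f)"
  have hf: "h = (\<Sum>a\<in>ks (ftop d f). sg (restr a {..<r}) (lk (ftop d f) a))"
    unfolding h_def by (rule dehom_formula[OF Vft])
  have lkh: "lk h b = (\<Sum>a\<in>ks (ftop d f). if restr a {..<r} = b then lk (ftop d f) a else 0)" for b
    unfolding hf by (simp add: lookup_sum lookup_single when_def)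
  have a0k: "a0 \<in> ks (ftop d f)" using a0 by (simp add: keys_ftop)
  have "lk h (restr a0 {..<r}) = lk (ftop d f) a0"
  proof -
    have "(\<Sum>a\<in>ks (ftop d f). if restr a {..<r} = restr a0 {..<r} then lk (ftop d f) a else 0) =
        (\<Sum>a\<in>ks (ftop d f). if a = a0 then lk (ftop d f) a else 0)"
    proof (rule sum.cong[OF refl])
      fix a assume a: "a \<in> ks (ftop d f)"
      have ka: "ks a \<subseteq> {..<Suc r}" "ks a0 \<subseteq> {..<Suc r}" using Vft a a0k by (auto simp: V_def)
      have "restr a {..<r} = restr a0 {..<r} \<longleftrightarrow> a = a0"
      proof
        assume e: "restr a {..<r} = restr a0 {..<r}"
        have t: "tdeg a = d" using a by (simp add: keys_ftop)
        have "tdeg a = tdeg (restr a {..<r}) + lk a r" "tdeg a0 = tdeg (restr a0 {..<r}) + lk a0 r"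
          using split_last[OF ka(1)] split_last[OF ka(2)] by (metis tdeg_add tdeg_single)+
        then have "lk a r = lk a0 r" using e t a0(2) by simp
        then show "a = a0" using split_last[OF ka(1)] split_last[OF ka(2)] e by metis
      qed simp
      then show "(if restr a {..<r} = restr a0 {..<r} then lk (ftop d f) a else 0) =
          (if a = a0 then lk (ftop d f) a else 0)" by simp
    qed
    then show ?thesis using a0k by (simp add: lkh sum.delta')
  qed
  then have "lk h (restr a0 {..<r}) \<noteq> 0" using a0 by (simp add: lk_ftop in_keys_iff)
  then have h0: "h \<noteq> 0" by auto
  have inimg: "\<exists>a\<in>ks (ftop d f). restr a {..<r} = b" if "b \<in> ks h" for b
    using that by (auto simp: in_keys_iff lkh intro: ccontr elim!: sum.not_neutral_contains_not_neutral split: if_splits)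
  have Vh: "V r h" unfolding V_def
  proof
    fix b assume "b \<in> ks h"
    then obtain a where "restr a {..<r} = b" using inimg by blast
    then show "ks b \<subseteq> {..<r}" by (auto simp: keys_restr)
  qed
  have dh: "\<forall>b\<in>ks h. tdeg b \<le> d"
  proof
    fix b assume "b \<in> ks h"
    then obtain a where a: "a \<in> ks (ftop d f)" "restr a {..<r} = b" using inimg by blast
    have "ks a \<subseteq> {..<Suc r}" using Vft a(1) by (auto simp: V_def)
    then have "tdeg b \<le> tdeg a" using a(2) tdeg_restr_le by blast
    then show "tdeg b \<le> d" using a(1) by (simp add: keys_ftop)
  qed
  have mu: "l \<le> Mu h a" if a: "a \<in> gr r A" for a
  proof -
    define v where "v = a(r := 1)"
    obtain u where u: "N \<le> card {c. (\<lambda>i. u i + c * v i) \<in> S}" using lines[OF a] unfolding v_def by blast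
    define T where "T = {c. (\<lambda>i. u i + c * v i) \<in> S}"
    have "T \<subseteq> (\<lambda>p. p r - u r) ` S" unfolding T_def v_def by force
    then have Tfin: "finite T" using Sfin finite_surj by blast
    have NT: "N \<le> card T" using u by (simp add: T_def)
    have sh: "shift a h = subst Const (\<lambda>i. if i < r then Const (v i) + Var i else 1) (ftop d f)"
    proof -
      have "shift a h = subst (shift a \<circ> Const) (shift a \<circ> (\<lambda>i. if i \<in> {..<r} then Var i else Const 1)) (ftop d f)"
        unfolding h_def shift_def by (rule subst_comp[OF hom_Const hom_subst[OF hom_Const]])
      also have "shift a \<circ> Const = Const" by (rule ext) (simp add: shift_def subst_Const[OF hom_Const])
      also have "shift a \<circ> (\<lambda>i. if i \<in> {..<r} then Var i else Const 1) = (\<lambda>i. if i < r then Const (v i) + Var i else 1)"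
        by (rule ext) (simp add: shift_def subst_Const[OF hom_Const] subst_Var[OF hom_Const] subst_one[OF hom_Const] v_def)
      finally show ?thesis .
    qed
    have z: "lk (shift a h) g = 0" if g: "tdeg g < l" for g
    proof -
      have "N * (l + 1) \<le> card T * (2 * l - tdeg g)" using NT g by (intro mult_le_mono) auto
      moreover have "d < N * (l + 1)" using dD N by (simp add: algebra_simps)
      ultimately have big: "d < card T * (2 * l - tdeg g)" by linarith
      have vr: "v r = 1" by (simp add: v_def)
      have mlt: "lk (shift (\<lambda>i. u i + c * v i) f) b = 0" if "c \<in> T" "tdeg b < 2 * l" for c b
        using f(3) that by (auto simp: T_def)
      show ?thesis unfolding sh by (rule line_lemma[OF Vf dl mlt Tfin vr big])
    qed
    show ?thesis
    proof (rule Mu_ge)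
      show "shift a h \<noteq> 0" using h0 shift_inj by blast
      fix g assume "g \<in> ks (shift a h)"
      then show "l \<le> tdeg g" using z by (auto simp: in_keys_iff not_less[symmetric])
    qed
  qed
  have G: "N * (\<Sum>a\<in>gr r A. Mu h a) \<le> d * N ^ r" by (rule GL[OF A h0 Vh dh])
  have gc: "finite (gr r A)" "card (gr r A) = N ^ r" using gr_card[OF A] by auto
  have "l * N ^ r \<le> (\<Sum>a\<in>gr r A. Mu h a)"
    using sum_mono[of "gr r A" "\<lambda>_. l" "Mu h"] mu gc by (simp add: mult.commute)
  then have "N * (l * N ^ r) \<le> d * N ^ r" using G by (meson le_trans mult_le_mono2)
  then have "(N * l) * N ^ r \<le> d * N ^ r" by (simp add: algebra_simps)
  then have "N * l \<le> d" using N by simp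
  then show False using dD l N by (metis diff_less less_le_trans mult.commute not_le nat_0_less_mult_iff zero_less_one
      less_numeral_extra(1) linorder_not_less order_less_le_trans)
qed


lemma fact_binom_bounds:
  "(M + 1) ^ n \<le> fact n * ((M + n) choose n) \<and> fact n * ((M + n) choose n) \<le> (M + n) ^ n"
proof (induction n)
  case 0 then show ?case by simp
next
  case (Suc n)
  have id: "fact (Suc n) * ((M + Suc n) choose Suc n) = Suc (M + n) * (fact n * ((M + n) choose n))"
    using Suc_times_binomial_eq[of "M + n" n] by (simp add: algebra_simps)
  have lo: "(M + 1) ^ Suc n \<le> Suc (M + n) * (fact n * ((M + n) choose n))"
    using Suc.IH mult_le_mono[of "M + 1" "Suc (M + n)" "(M+1)^n" "fact n * ((M + n) choose n)"] by simp
  have "Suc (M + n) * (fact n * ((M + n) choose n)) \<le> Suc (M + n) * (M + n) ^ n"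
    by (rule mult_le_mono2) (use Suc.IH in blast)
  also have "\<dots> \<le> Suc (M + n) * (M + Suc n) ^ n" by (rule mult_le_mono2) (rule power_mono; simp)
  finally have up: "Suc (M + n) * (fact n * ((M + n) choose n)) \<le> (M + Suc n) ^ Suc n" by simp
  show ?case using lo up id by simp
qed

lemma real_bound:
  assumes H: "\<And>l. 1 \<le> l \<Longrightarrow> (l * N - 1 + n) choose n \<le> s * ((2 * l - 1 + n) choose n)"
    and N: "0 < N"
  shows "(real N / 2) ^ n \<le> real s"
proof -
  define X where "X = (\<lambda>l::nat. (real l * real N / (2 * real l - 1 + real n)) ^ n)"
  have lim: "X \<longlonglongrightarrow> (real N / 2) ^ n"
  proof -
    have "((\<lambda>l. real l * real N / (2 * real l - 1 + real n)) \<longlongrightarrow> real N / 2) sequentially"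
      by real_asymp
    then show ?thesis unfolding X_def by (rule tendsto_power)
  qed
  have le: "X l \<le> real s" if l: "1 \<le> l" for l
  proof -
    have lN: "1 \<le> l * N" using l N by simp
    have "(l * N) ^ n \<le> fact n * ((l * N - 1 + n) choose n)"
      using fact_binom_bounds[of "l * N - 1" n] lN by simp
    also have "\<dots> \<le> fact n * (s * ((2 * l - 1 + n) choose n))" using H[OF l] by simp
    also have "\<dots> = s * (fact n * ((2 * l - 1 + n) choose n))" by simp
    also have "\<dots> \<le> s * (2 * l - 1 + n) ^ n" using fact_binom_bounds[of "2 * l - 1" n] by simp
    finally have nat: "(l * N) ^ n \<le> s * (2 * l - 1 + n) ^ n" .
    have r: "real (2 * l - 1 + n) = 2 * real l - 1 + real n" using l by (simp add: of_nat_diff)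
    have pos: "0 < 2 * real l - 1 + real n" using l by simp
    have "real ((l * N) ^ n) \<le> real (s * (2 * l - 1 + n) ^ n)" using nat by (simp only: of_nat_le_iff)
    then have "(real l * real N) ^ n \<le> real s * (real (2 * l - 1 + n)) ^ n" by (simp only: of_nat_power of_nat_mult)
    then have "(real l * real N) ^ n \<le> real s * (2 * real l - 1 + real n) ^ n" by (simp only: r)
    then show ?thesis unfolding X_def using pos by (simp add: power_divide divide_le_eq)
  qed
  show ?thesis by (rule LIMSEQ_le_const2[OF lim]) (use le in auto)
qed


definition Tb :: "nat \<Rightarrow> (nat \<Rightarrow> nat \<Rightarrow> 'a::field) \<Rightarrow> (nat \<Rightarrow> 'a) \<Rightarrow> (nat \<Rightarrow> 'a)" where
  "Tb n b y = (\<lambda>j. \<Sum>i<n. y i * b i j)"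

lemma Tb_kvec: "is_basis n b \<Longrightarrow> Tb n b y \<in> kvec n"
  unfolding is_basis_def kvec_def Tb_def by auto

lemma Tb_inj: assumes "is_basis n b" "y \<in> kvec n" "y' \<in> kvec n" "Tb n b y = Tb n b y'" shows "y = y'"
proof -
  have d: "(\<Sum>i<n. (y i - y' i) * b i j) = Tb n b y j - Tb n b y' j" for j
    by (simp add: Tb_def left_diff_distrib sum_subtractf)
  have "\<forall>j. (\<Sum>i<n. (y i - y' i) * b i j) = 0" using assms(4) by (simp add: d)
  then have z: "\<forall>i<n. y i - y' i = 0"
    using assms(1)[unfolded is_basis_def, THEN conjunct2, rule_format, of "\<lambda>i. y i - y' i"] by blast
  show ?thesis
  proof
    fix i show "y i = y' i"
    proof (cases "i < n")
      case True then show ?thesis using z by simp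
    next
      case False then show ?thesis using assms(2,3) by (simp add: kvec_def)
    qed
  qed
qed

lemma Tb_surj: assumes B: "is_basis n b" and x: "x \<in> kvec n" shows "\<exists>y\<in>kvec n. Tb n b y = x"
proof -
  define w where "w = (\<lambda>j i. if i < n then b i j else x j)"
  obtain c where c: "\<exists>i\<in>{..n}. c i \<noteq> 0" "\<forall>j\<in>{..<n}. (\<Sum>i\<in>{..n}. w j i * c i) = 0"
    using lin_solve[of "{..<n}" "{..n}" w] by auto
  have eq: "(\<Sum>i<n. c i * b i j) + c n * x j = 0" for j
  proof (cases "j < n")
    case True
    then have "(\<Sum>i\<in>{..n}. w j i * c i) = 0" using c(2) by auto
    then show ?thesis by (simp add: w_def lessThan_Suc_atMost[symmetric] mult.commute)
  next
    case False
    then show ?thesis using B x by (auto simp: is_basis_def kvec_def)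
  qed
  have cn: "c n \<noteq> 0"
  proof
    assume "c n = 0"
    then have "\<forall>i<n. c i = 0" using B eq unfolding is_basis_def by auto
    then show False using c(1) \<open>c n = 0\<close> by (auto simp: le_less)
  qed
  define y where "y = (\<lambda>i. if i < n then - c i / c n else 0)"
  have "y \<in> kvec n" by (simp add: y_def kvec_def)
  moreover have "Tb n b y = x"
  proof
    fix j
    have "Tb n b y j = - (\<Sum>i<n. c i * b i j) / c n"
      by (simp add: Tb_def y_def sum_divide_distrib sum_negf)
    also have "\<dots> = x j"
    proof -
      have e2: "c n * x j = - (\<Sum>i<n. c i * b i j)" using eq[of j] by (simp add: add.commute eq_neg_iff_add_eq_0)
      have "x j = (c n * x j) / c n" using cn by simp
      also have "\<dots> = - (\<Sum>i<n. c i * b i j) / c n" by (simp only: e2)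
      finally show ?thesis by (rule sym)
    qed
    finally show "Tb n b y j = x j" .
  qed
  ultimately show ?thesis by blast
qed

lemma Tb_lin: "Tb n b (\<lambda>i. u i + c * w i) = (\<lambda>j. Tb n b u j + c * Tb n b w j)"
  unfolding Tb_def by (rule ext) (simp add: distrib_right sum.distrib sum_distrib_left mult.assoc)


theorem theorem3p4:
  fixes n N :: nat and L :: "(nat \<Rightarrow> 'a::field) set set" and S :: "(nat \<Rightarrow> 'a) set"
  assumes "n \<ge> 2" and "N > 0"
    and "\<forall>l\<in>L. is_aline n l"
    and "S \<subseteq> kvec n"
    and "\<forall>l\<in>L. infinite (l \<inter> S) \<or> card (l \<inter> S) \<ge> N"
    and "contains_grid n N (directions n L)"
  shows "infinite S \<or> real (card S) \<ge> (real N / 2) ^ n"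
proof (cases "finite S")
  case False then show ?thesis by simp
next
  case Sfin: True
  note n2 = assms(1) and N = assms(2) and Skv = assms(4) and lineN = assms(5)
  obtain b A where B: "is_basis n b" and A: "\<forall>i<n-1. finite (A i) \<and> card (A i) = N"
    and G: "grid n b A \<subseteq> directions n L"
    using assms(6) unfolding contains_grid_def by blast
  define r where "r = n - 1"
  have n: "n = Suc r" using n2 by (simp add: r_def)
  define S' where "S' = {y \<in> kvec n. Tb n b y \<in> S}"
  have bij: "bij_betw (Tb n b) S' S"
    unfolding bij_betw_def
  proof
    show "inj_on (Tb n b) S'" by (rule inj_onI) (use Tb_inj[OF B] in \<open>auto simp: S'_def\<close>)
    show "Tb n b ` S' = S"
    proof
      show "Tb n b ` S' \<subseteq> S" by (auto simp: S'_def)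
      show "S \<subseteq> Tb n b ` S'"
      proof
        fix x assume "x \<in> S"
        then obtain y where "y \<in> kvec n" "Tb n b y = x" using Tb_surj[OF B] Skv by blast
        then show "x \<in> Tb n b ` S'" using \<open>x \<in> S\<close> by (auto simp: S'_def)
      qed
    qed
  qed
  have S'fin: "finite S'" using bij Sfin bij_betw_finite by blast
  have cardS: "card S' = card S" using bij bij_betw_same_card by blast
  have A': "\<forall>i<r. finite (A i) \<and> card (A i) = N" using A by (simp add: r_def)
  have lines: "\<exists>u. N \<le> card {c. (\<lambda>i. u i + c * (a(r := 1)) i) \<in> S'}" if a: "a \<in> gr r A" for a
  proof -
    define w where "w = a(r := 1)"
    have wk: "w \<in> kvec n" using a by (auto simp: w_def gr_def kvec_def n)
    define Va where "Va = (\<lambda>j. (\<Sum>i<n-1. a i * b i j) + b (n-1) j)"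
    have TW: "Tb n b w = Va"
    proof
      fix j
      have "(\<Sum>i<Suc r. w i * b i j) = (\<Sum>i<r. w i * b i j) + w r * b r j" by simp
      also have "(\<Sum>i<r. w i * b i j) = (\<Sum>i<r. a i * b i j)" by (rule sum.cong) (auto simp: w_def)
      finally show "Tb n b w j = Va j" by (simp add: Tb_def Va_def n w_def)
    qed
    have "ppoint Va \<in> grid n b A" unfolding grid_def Va_def using a by (auto simp: gr_def r_def)
    then have "ppoint Va \<in> directions n L" using G by blast
    then obtain v u where v: "v \<in> kvec n" "v \<noteq> (\<lambda>i. 0)" "ppoint Va = ppoint v" and u: "u \<in> kvec n" "aline u v \<in> L"
      unfolding directions_def by blast
    have "v \<in> ppoint v" unfolding ppoint_def by (rule CollectI, rule exI[of _ 1]) simp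
    then obtain c0 where c0: "c0 \<noteq> 0" "v = (\<lambda>i. c0 * Va i)" using v(3) unfolding ppoint_def by auto
    have Va0: "Va \<noteq> (\<lambda>i. 0)" using v(2) c0 by auto
    then obtain j0 where j0: "Va j0 \<noteq> 0" by auto
    define P where "P = (\<lambda>c. (\<lambda>i. u i + c * Va i))"
    have Pinj: "inj P"
    proof (rule injI)
      fix x y assume e: "P x = P y"
      have "x * Va j0 = y * Va j0" using fun_cong[OF e, of j0] by (simp add: P_def)
      then show "x = y" using j0 by simp
    qed
    have lS: "P ` {c. P c \<in> S} = aline u v \<inter> S"
    proof
      show "P ` {c. P c \<in> S} \<subseteq> aline u v \<inter> S"
      proof
        fix x assume "x \<in> P ` {c. P c \<in> S}"
        then obtain c where "x = P c" "P c \<in> S" by auto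
        moreover have "P c = (\<lambda>i. u i + (c / c0) * v i)" using c0 by (simp add: P_def)
        ultimately show "x \<in> aline u v \<inter> S" unfolding aline_def by (auto intro!: exI[of _ "c / c0"])
      qed
      show "aline u v \<inter> S \<subseteq> P ` {c. P c \<in> S}"
      proof
        fix x assume x: "x \<in> aline u v \<inter> S"
        then obtain c where c: "x = (\<lambda>i. u i + c * v i)" unfolding aline_def by auto
        then have "x = P (c * c0)" using c0 by (simp add: P_def mult.assoc)
        then show "x \<in> P ` {c. P c \<in> S}" using x by auto
      qed
    qed
    have "card {c. P c \<in> S} = card (aline u v \<inter> S)"
      using card_image[OF inj_on_subset[OF Pinj]] lS by (metis subset_UNIV)
    moreover have "finite (aline u v \<inter> S)" using Sfin by simp
    ultimately have NP: "N \<le> card {c. P c \<in> S}" using lineN u(2) by auto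
    obtain u' where u': "u' \<in> kvec n" "Tb n b u' = u" using Tb_surj[OF B u(1)] by blast
    have "{c. (\<lambda>i. u' i + c * w i) \<in> S'} = {c. P c \<in> S}"
    proof -
      have "(\<lambda>i. u' i + c * w i) \<in> kvec n" for c using u'(1) wk by (simp add: kvec_def)
      moreover have "Tb n b (\<lambda>i. u' i + c * w i) = P c" for c
        by (simp add: Tb_lin u'(2) TW P_def)
      ultimately show ?thesis by (auto simp: S'_def)
    qed
    then show ?thesis using NP unfolding w_def by metis
  qed
  have "\<And>l. 1 \<le> l \<Longrightarrow> (l * N - 1 + Suc r) choose Suc r \<le> card S' * ((2 * l - 1 + Suc r) choose Suc r)"
    by (rule core_count[OF S'fin N A' lines])
  then have "(real N / 2) ^ Suc r \<le> real (card S')" by (rule real_bound[OF _ N])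
  then show ?thesis using cardS n by simp
qed


end
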